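(* Let ${\mathcal M}=(E,\rho)$ be a $q$-matroid of rank $r$ on $E=\mathbb{F}_q^n$, and let $I_{{\mathcal M}}$ be its order complex. Let $\{C_i : i\in S\}$, $S=\{1,\dots,s\}$, be the $q$-circuits of ${\mathcal M}$, and for $X\subseteq S$ let $C_X$ be the $\mathbb{F}_q$-linear span of the $C_i$, $i\in X$. For $i\ge1$ and $l\ge0$ let $\lambda_{i,l}$ be the number of subsets $X\subseteq S$ with $|X|=i$ such that $C_X$ has codimension $l$ in $E$. Then $$\chi(I_{{\mathcal M}})=(-1)^{r-1}q^{\binom{n}{2}}\,\overline{\mu}({\mathcal M})+\sum_{l=1}^{n-1}\sum_{i=1}^{s}\lambda_{i,l}\sum_{j=0}^{l}(-1)^{n+i+j-1}q^{\binom{n-j}{2}}{l\brack j}_q .$$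
   Context: A $q$-matroid is a pair $(E,\rho)$, $E=\mathbb{F}_q^n$, with $\rho$ from the set of subspaces of $E$ to $\mathbb{Z}_{\ge0}$ such that $0\le\rho(X)\le\dim X$, $\rho(X)\le\rho(Y)$ whenever $X\subseteq Y$, and $\rho(X+Y)+\rho(X\cap Y)\le\rho(X)+\rho(Y)$. Its rank is $\rho(E)$; its nullity function is $\eta(X)=\dim X-\rho(X)$. A subspace $U$ is independent if $\rho(U)=\dim U$. A $q$-cycle of nullity $i$ is a minimal (under inclusion) element of $\{X:\eta(X)=i\}$; $q$-circuits are the $q$-cycles of nullity $1$. The order complex $I_{{\mathcal M}}$ is the simplicial complex whose faces are the chains $V_1\subsetneq\cdots\subsetneq V_k$ ($k\ge0$, empty chain included) of nonzero independent subspaces; its reduced Euler characteristic is $\chi(I_{{\mathcal M}})=\sum_{k\ge0}(-1)^{k-1}f_k$, where $f_k$ is the number of such chains with $k$ members. Let $L$ be the set of $q$-cycles of ${\mathcal M}$ ordered by inclusion (a lattice with minimum $0=\{0\}$ and maximum $1$); its Möbius function is defined by $\mu(x,x)=1$ and $\mu(x,y)=-\sum_{x\le z<y}\mu(x,z)$, and $\mu(L)=\mu(0,1)$. The dual $q$-matroid ${\mathcal M}^*$ has rank function $\rho^*(X)=\dim X-\rho(E)+\rho(X^\perp)$ ($\perp$ with respect to the standard bilinear form); a coloop of ${\mathcal M}$ is a one-dimensional subspace $X$ with $\rho^*(X)=0$. Set $\overline{\mu}({\mathcal M})=|\mu(L)|$ if ${\mathcal M}$ has no coloop and $\overline{\mu}({\mathcal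 M})=0$ otherwise. ${l\brack j}_q=\prod_{i=0}^{j-1}\frac{q^l-q^i}{q^j-q^i}$ is the number of $j$-dimensional subspaces of $\mathbb{F}_q^l$. *)

theory Defs
  imports "HOL-Analysis.Analysis"
begin

definition vscale :: "'a::field \<Rightarrow> 'a ^ 'n \<Rightarrow> 'a ^ 'n" where
  "vscale c v = (\<chi> i. c * v $ i)"

definition subsp :: "('a::field ^ 'n) set \<Rightarrow> bool" where
  "subsp X = module.subspace vscale X"

definition vspan :: "('a::field ^ 'n) set \<Rightarrow> ('a ^ 'n) set" where
  "vspan X = module.span vscale X"

definition vdim :: "('a::field ^ 'n) set \<Rightarrow> nat" where
  "vdim X = vector_space.dim vscale X"

definition vsum :: "('a::field ^ 'n) set \<Rightarrow> ('a ^ 'n) set \<Rightarrow> ('a ^ 'n) set" where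
  "vsum X Y = {x + y | x y. x \<in> X \<and> y \<in> Y}"

definition orth :: "('a::field ^ 'n::finite) set \<Rightarrow> ('a ^ 'n) set" where
  "orth X = {y. \<forall>x\<in>X. (\<Sum>i\<in>UNIV. x $ i * y $ i) = 0}"

definition qmatroid :: "(('a::field ^ 'n) set \<Rightarrow> nat) \<Rightarrow> bool" where
  "qmatroid rho \<longleftrightarrow>
     (\<forall>X. subsp X \<longrightarrow> rho X \<le> vdim X) \<and>
     (\<forall>X Y. subsp X \<and> subsp Y \<and> X \<subseteq> Y \<longrightarrow> rho X \<le> rho Y) \<and>
     (\<forall>X Y. subsp X \<and> subsp Y \<longrightarrow> rho (vsum X Y) + rho (X \<inter> Y) \<le> rho X + rho Y)"

definition nullity :: "(('a::field ^ 'n) set \<Rightarrow> nat) \<Rightarrow> ('a ^ 'n) set \<Rightarrow> nat" where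
  "nullity rho X = vdim X - rho X"

definition indep :: "(('a::field ^ 'n) set \<Rightarrow> nat) \<Rightarrow> ('a ^ 'n) set \<Rightarrow> bool" where
  "indep rho U \<longleftrightarrow> subsp U \<and> rho U = vdim U"

definition qcycle_of :: "(('a::field ^ 'n) set \<Rightarrow> nat) \<Rightarrow> nat \<Rightarrow> ('a ^ 'n) set \<Rightarrow> bool" where
  "qcycle_of rho i X \<longleftrightarrow> subsp X \<and> nullity rho X = i \<and>
     (\<forall>Y. subsp Y \<and> nullity rho Y = i \<and> Y \<subseteq> X \<longrightarrow> Y = X)"

definition qcycles :: "(('a::field ^ 'n) set \<Rightarrow> nat) \<Rightarrow> ('a ^ 'n) set set" where
  "qcycles rho = {X. \<exists>i. qcycle_of rho i X}"

definition qcircuits :: "(('a::field ^ 'n) set \<Rightarrow> nat) \<Rightarrow> ('a ^ 'n) set set" where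
  "qcircuits rho = {X. qcycle_of rho 1 X}"

text \<open>Faces: chains (finite sets totally ordered by inclusion) of nonzero independent subspaces,
  the empty chain included; a chain with k members contributes (-1)^(k-1).\<close>
definition order_complex :: "(('a::field ^ 'n) set \<Rightarrow> nat) \<Rightarrow> ('a ^ 'n) set set set" where
  "order_complex rho = {C. finite C \<and> (\<forall>V\<in>C. indep rho V \<and> V \<noteq> {0}) \<and>
      (\<forall>V\<in>C. \<forall>W\<in>C. V \<subseteq> W \<or> W \<subseteq> V)}"

definition euler_char :: "(('a::field ^ 'n) set \<Rightarrow> nat) \<Rightarrow> int" where
  "euler_char rho = (\<Sum>C\<in>order_complex rho. - ((-1) ^ card C))"

function mobius :: "'b::finite set set \<Rightarrow> 'b set \<Rightarrow> 'b set \<Rightarrow> int" where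
  "mobius P x y =
     (if x = y then 1
      else if x \<subset> y then - (\<Sum>z\<in>{z\<in>P. x \<subseteq> z \<and> z \<subset> y}. mobius P x z)
      else 0)"
  by auto
termination
  by (relation "Wellfounded.measure (\<lambda>(P, x, y). card y)")
     (auto intro: psubset_card_mono)

definition mu_L :: "(('a::{finite,field} ^ 'n) set \<Rightarrow> nat) \<Rightarrow> int" where
  "mu_L rho = mobius (qcycles rho) {0}
     (THE t. t \<in> qcycles rho \<and> (\<forall>c\<in>qcycles rho. c \<subseteq> t))"

definition dual_rank :: "(('a::field ^ 'n::finite) set \<Rightarrow> nat) \<Rightarrow> ('a ^ 'n) set \<Rightarrow> int" where
  "dual_rank rho X = int (vdim X) - int (rho UNIV) + int (rho (orth X))"

definition coloop :: "(('a::field ^ 'n::finite) set \<Rightarrow> nat) \<Rightarrow> ('a ^ 'n) set \<Rightarrow> bool" where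
  "coloop rho X \<longleftrightarrow> subsp X \<and> vdim X = 1 \<and> dual_rank rho X = 0"

definition mu_bar :: "(('a::{finite,field} ^ 'n::finite) set \<Rightarrow> nat) \<Rightarrow> nat" where
  "mu_bar rho = (if (\<exists>X. coloop rho X) then 0 else nat \<bar>mu_L rho\<bar>)"

definition qbinom :: "nat \<Rightarrow> nat \<Rightarrow> nat \<Rightarrow> real" where
  "qbinom q l j = (\<Prod>i<j. (real q ^ l - real q ^ i) / (real q ^ j - real q ^ i))"

definition lam :: "(('a::field ^ 'n::finite) set \<Rightarrow> nat) \<Rightarrow> nat \<Rightarrow> nat \<Rightarrow> nat" where
  "lam rho i l = card {X. X \<subseteq> qcircuits rho \<and> card X = i \<and>
       CARD('n) - vdim (vspan (\<Union>X)) = l}"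

end

theory Submission
  imports Defs
begin

lemma vscale_eq: "vscale = (*s)"
  by (rule ext, rule ext) (simp add: vscale_def vector_scalar_mult_def)

lemma subsp_vec: "subsp X = vec.subspace X"
  by (simp add: subsp_def vscale_eq)
lemma vdim_vec: "vdim X = vec.dim X"
  by (simp add: vdim_def vscale_eq)
lemma vspan_vec: "vspan X = vec.span X"
  by (simp add: vspan_def vscale_eq)

lemma vsum_subsp: "subsp X \<Longrightarrow> subsp Y \<Longrightarrow> subsp (vsum X Y)"
  unfolding subsp_vec vsum_def by (rule vec.subspace_sums)

lemma vsum_dim: "subsp X \<Longrightarrow> subsp Y \<Longrightarrow> vdim (vsum X Y) + vdim (X \<inter> Y) = vdim X + vdim Y"
  unfolding subsp_vec vsum_def vdim_vec by (rule vec.dim_sums_Int)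

lemma vsum_span: "subsp X \<Longrightarrow> subsp Y \<Longrightarrow> vsum X Y = vec.span (X \<union> Y)"
proof -
  assume "subsp X" "subsp Y"
  then have sx: "vec.span X = X" and sy: "vec.span Y = Y" unfolding subsp_vec by (simp_all add: vec.span_eq_iff)
  show ?thesis unfolding vsum_def vec.span_Un sx sy by simp
qed

lemma vsum_least: "subsp X \<Longrightarrow> subsp Y \<Longrightarrow> subsp Z \<Longrightarrow> X \<subseteq> Z \<Longrightarrow> Y \<subseteq> Z \<Longrightarrow> vsum X Y \<subseteq> Z"
  unfolding subsp_vec vsum_def using vec.subspace_add by blast

lemma vsum_upper1: "subsp Y \<Longrightarrow> X \<subseteq> vsum X Y"
  unfolding subsp_vec vsum_def using vec.subspace_0 by force
lemma vsum_upper2: "subsp X \<Longrightarrow> Y \<subseteq> vsum X Y"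
  unfolding subsp_vec vsum_def using vec.subspace_0 by force

lemma subsp_Int: "subsp X \<Longrightarrow> subsp Y \<Longrightarrow> subsp (X \<inter> Y)"
  unfolding subsp_vec by (rule vec.subspace_inter)

lemma subsp_UNIV: "subsp UNIV" unfolding subsp_vec by (rule vec.subspace_UNIV)
lemma subsp_zero: "subsp {0}" unfolding subsp_vec by (rule vec.subspace_single_0)
lemma vdim_UNIV: "vdim (UNIV :: ('a::field^'n) set) = CARD('n)"
  using vec_dim_card[where 'a='a and 'n='n] by (simp add: vdim_vec)
lemma vdim_zero[simp]: "vdim {0} = 0"
  by (simp add: vdim_vec)
lemma vdim_mono: "X \<subseteq> Y \<Longrightarrow> vdim X \<le> vdim Y"
  unfolding vdim_vec by (rule vec.dim_subset)
lemma vdim_le_n: "vdim (X :: ('a::field^'n) set) \<le> CARD('n)"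
  by (metis vdim_UNIV vdim_mono subset_UNIV)
lemma subsp_eq_dim: "subsp X \<Longrightarrow> subsp Y \<Longrightarrow> X \<subseteq> Y \<Longrightarrow> vdim Y \<le> vdim X \<Longrightarrow> X = Y"
  unfolding subsp_vec vdim_vec by (rule vec.subspace_dim_equal)
lemma subsp_psubset_dim: "subsp X \<Longrightarrow> subsp Y \<Longrightarrow> X \<subset> Y \<Longrightarrow> vdim X < vdim Y"
proof -
  assume a: "subsp X" "subsp Y" "X \<subset> Y"
  have "vdim X \<le> vdim Y" using a by (intro vdim_mono) auto
  moreover have "vdim X \<noteq> vdim Y" using subsp_eq_dim[of X Y] a by auto
  ultimately show ?thesis by simp
qed
lemma vdim_eq0: "subsp X \<Longrightarrow> vdim X = 0 \<longleftrightarrow> X = {0}"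
  unfolding subsp_vec vdim_vec
proof
  assume "vec.subspace X" "vec.dim X = 0"
  then have "X \<subseteq> {0}" using vec.dim_eq_0 by blast
  then show "X = {0}" using vec.subspace_0[OF \<open>vec.subspace X\<close>] by blast
qed simp
lemma subsp_zero_in: "subsp X \<Longrightarrow> 0 \<in> X"
  unfolding subsp_vec by (rule vec.subspace_0)
lemma subsp_span: "subsp (vec.span S)"
  unfolding subsp_vec by (rule vec.subspace_span)
lemma vspan_subsp: "subsp (vspan S)"
  by (simp add: vspan_vec subsp_span)

section \<open>Cardinality of subspaces\<close>

lemma card_span_insert:
  fixes T :: "('a::{finite,field}^'n) set"
  assumes T: "subsp T" and y: "y \<notin> T"
  shows "card (vec.span (insert y T)) = CARD('a) * card T"
proof -
  have sT: "vec.span T = T" using T unfolding subsp_vec by (simp add: vec.span_eq_iff)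
  have eq: "vec.span (insert y T) = (\<lambda>(k,t). k *s y + t) ` ((UNIV::'a set) \<times> T)"
  proof (rule set_eqI)
    fix x
    show "x \<in> vec.span (insert y T) \<longleftrightarrow> x \<in> (\<lambda>(k,t). k *s y + t) ` ((UNIV::'a set) \<times> T)"
      unfolding vec.span_insert sT
    proof
      assume "x \<in> {x. \<exists>k. x - k *s y \<in> T}"
      then obtain k where "x - k *s y \<in> T" by blast
      then show "x \<in> (\<lambda>(k,t). k *s y + t) ` ((UNIV::'a set) \<times> T)"
        by (intro image_eqI[of _ _ "(k, x - k *s y)"]) auto
    next
      assume "x \<in> (\<lambda>(k,t). k *s y + t) ` ((UNIV::'a set) \<times> T)"
      then obtain k t where "x = k *s y + t" "t \<in> T" by auto
      then show "x \<in> {x. \<exists>k. x - k *s y \<in> T}" by (intro CollectI exI[of _ k]) simp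
    qed
  qed
  have inj: "inj_on (\<lambda>(k,t). k *s y + t) ((UNIV::'a set) \<times> T)"
  proof (rule inj_onI, clarify)
    fix k t k' t'
    assume t: "t \<in> T" "t' \<in> T" and e: "k *s y + t = k' *s y + t'"
    have "(k - k') *s y = t' - t" using e by (simp add: algebra_simps vec.scale_left_diff_distrib)
    moreover have "t' - t \<in> T" using t T unfolding subsp_vec by (simp add: vec.subspace_diff)
    ultimately have kk: "k = k'"
    proof -
      assume a: "(k - k') *s y = t' - t" "t' - t \<in> T"
      show "k = k'"
      proof (rule ccontr)
        assume "k \<noteq> k'"
        then have i: "inverse (k - k') * (k - k') = 1" by simp
        have "y = inverse (k - k') *s ((k - k') *s y)" by (simp only: vec.scale_scale i vec.scale_one)
        also have "\<dots> \<in> T"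
        proof -
          have "(k - k') *s y \<in> T" using a by simp
          then show ?thesis using T unfolding subsp_vec by (rule vec.subspace_scale[rotated])
        qed
        finally show False using y by simp
      qed
    qed
    then show "k = k' \<and> t = t'" using e by simp
  qed
  have "card (vec.span (insert y T)) = card ((UNIV::'a set) \<times> T)"
    using card_image[OF inj] eq by (simp add: card_cartesian_product)
  also have "\<dots> = CARD('a) * card T" by (simp add: card_cartesian_product)
  finally show ?thesis .
qed

lemma card_subsp:
  fixes X :: "('a::{finite,field}^'n) set"
  assumes "subsp X"
  shows "card X = CARD('a) ^ vdim X"
proof -
  have "\<forall>X :: ('a^'n) set. subsp X \<and> vdim X = d \<longrightarrow> card X = CARD('a) ^ d" for d
  proof (induction d)
    case 0
    then show ?case using vdim_eq0 by (metis card.empty card_insert_disjoint empty_iff finite.emptyI One_nat_def power_0)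
  next
    case (Suc d)
    show ?case
    proof clarify
      fix X :: "('a^'n) set" assume X: "subsp X" "vdim X = Suc d"
      obtain T where T: "vec.subspace T" "T \<subseteq> vec.span X" "vec.dim T = d"
        using vec.choose_subspace_of_subspace[of d X] X unfolding vdim_vec by auto
      have sX: "vec.span X = X" using X unfolding subsp_vec by (simp add: vec.span_eq_iff)
      have TX: "T \<subseteq> X" using T sX by simp
      have "T \<noteq> X" using T X unfolding vdim_vec by auto
      then obtain y where y: "y \<in> X" "y \<notin> T" using TX by blast
      have sT: "vec.span T = T" using T by (simp add: vec.span_eq_iff)
      have sub: "vec.span (insert y T) \<subseteq> X"
        using X y TX unfolding subsp_vec by (simp add: vec.span_minimal)
      have "vec.dim (vec.span (insert y T)) = Suc d"
      proof -
        have "y \<notin> vec.span T" unfolding sT using y(2) .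
        then show ?thesis using T by (simp add: vec.dim_insert)
      qed
      then have eqX: "vec.span (insert y T) = X"
        using subsp_eq_dim[of "vec.span (insert y T)" X] sub X subsp_span
        unfolding vdim_vec by auto
      have "card X = CARD('a) * card T"
        using card_span_insert[of T y] T y eqX unfolding subsp_vec by simp
      also have "card T = CARD('a) ^ d" using Suc.IH T unfolding subsp_vec vdim_vec by auto
      finally show "card X = CARD('a) ^ Suc d" by simp
    qed
  qed
  then show ?thesis using assms by blast
qed


lemma subsp_step:
  fixes X Y :: "('a::field^'n) set"
  assumes X: "subsp X" and Y: "subsp Y" and XY: "X \<subseteq> Y" and k: "vdim X \<le> k" "k \<le> vdim Y"
  shows "\<exists>Z. subsp Z \<and> X \<subseteq> Z \<and> Z \<subseteq> Y \<and> vdim Z = k"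
  using k
proof (induction k rule: dec_induct)
  case base
  then show ?case using X XY by blast
next
  case (step m)
  have "m \<le> vdim Y" using step by simp
  then obtain Z where Z: "subsp Z" "X \<subseteq> Z" "Z \<subseteq> Y" "vdim Z = m" using step.IH by blast
  have "Z \<noteq> Y" using Z step by auto
  then obtain y where y: "y \<in> Y" "y \<notin> Z" using Z by blast
  have sZ: "vec.span Z = Z" using Z unfolding subsp_vec by (simp add: vec.span_eq_iff)
  have yZ: "y \<notin> vec.span Z" unfolding sZ using y(2) .
  let ?Z = "vec.span (insert y Z)"
  have "subsp ?Z" by (rule subsp_span)
  moreover have "X \<subseteq> ?Z" using Z vec.span_superset by blast
  moreover have "?Z \<subseteq> Y" using Y y Z unfolding subsp_vec by (simp add: vec.span_minimal)
  moreover have "vdim ?Z = Suc m" using Z yZ unfolding vdim_vec by (simp add: vec.dim_insert)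
  ultimately show ?case by blast
qed

section \<open>Orthogonal complements\<close>

definition dotp :: "'a::field^'n \<Rightarrow> 'a^'n \<Rightarrow> 'a" where
  "dotp x y = (\<Sum>i\<in>UNIV. x $ i * y $ i)"

lemma orth_dotp: "orth X = {y. \<forall>x\<in>X. dotp x y = 0}"
  by (simp add: orth_def dotp_def)

lemma dotp_comm: "dotp x y = dotp y x"
  by (simp add: dotp_def mult.commute)
lemma dotp_add_left: "dotp (x + x') y = dotp x y + dotp x' y"
  by (simp add: dotp_def algebra_simps sum.distrib)
lemma dotp_scale_left: "dotp (c *s x) y = c * dotp x y"
  by (simp add: dotp_def algebra_simps sum_distrib_left)
lemma dotp_add_right: "dotp y (x + x') = dotp y x + dotp y x'"
  by (simp add: dotp_def algebra_simps sum.distrib)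
lemma dotp_scale_right: "dotp y (c *s x) = c * dotp y x"
  by (simp add: dotp_def algebra_simps sum_distrib_left)
lemma dotp_zero_left[simp]: "dotp 0 y = 0" by (simp add: dotp_def)
lemma dotp_zero_right[simp]: "dotp y 0 = 0" by (simp add: dotp_def)

lemma subsp_orth: "subsp (orth X)"
  unfolding subsp_vec orth_dotp vec.subspace_def
  by (auto simp: dotp_add_right dotp_scale_right)

lemma orth_antimono: "X \<subseteq> Y \<Longrightarrow> orth Y \<subseteq> orth X"
  unfolding orth_dotp by auto

lemma orth_span: "orth (vec.span B) = orth B"
proof
  show "orth (vec.span B) \<subseteq> orth B" by (rule orth_antimono[OF vec.span_superset])
  show "orth B \<subseteq> orth (vec.span B)"
  proof
    fix y assume y: "y \<in> orth B"
    have "vec.subspace {x. dotp x y = 0}"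
      unfolding vec.subspace_def by (auto simp: dotp_add_left dotp_scale_left)
    moreover have "B \<subseteq> {x. dotp x y = 0}" using y unfolding orth_dotp by auto
    ultimately have "vec.span B \<subseteq> {x. dotp x y = 0}" by (rule vec.span_minimal[rotated])
    then show "y \<in> orth (vec.span B)" unfolding orth_dotp by auto
  qed
qed

lemma subset_orth_orth: "X \<subseteq> orth (orth X)"
  unfolding orth_dotp by (auto simp: dotp_comm)

interpretation vsp: vector_space_pair "(*s) :: 'a::field \<Rightarrow> 'a^'n \<Rightarrow> 'a^'n" "(*) :: 'a \<Rightarrow> 'a \<Rightarrow> 'a" ..

lemma dual_vector:
  fixes B :: "('a::field^'n) set"
  assumes B: "vec.independent B" and b: "b \<in> B"
  shows "\<exists>w. \<forall>c\<in>B. dotp c w = (if c = b then 1 else 0)"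
proof -
  define f where "f = vsp.construct B (\<lambda>c. if c = b then (1::'a) else 0)"
  have lin: "Vector_Spaces.linear (*s) (*) f" unfolding f_def by (rule vsp.linear_construct[OF B])
  define w where "w = (\<chi> i. f (axis i 1))"
  have dw: "dotp c w = f c" for c
  proof -
    have "f c = f (\<Sum>i\<in>UNIV. (c$i) *s axis i 1)" by (simp add: basis_expansion)
    also have "\<dots> = (\<Sum>i\<in>UNIV. f ((c$i) *s axis i 1))" by (rule vsp.linear_sum[OF lin])
    also have "\<dots> = (\<Sum>i\<in>UNIV. c$i * f (axis i 1))" by (simp add: vsp.linear_scale[OF lin])
    finally show ?thesis by (simp add: dotp_def w_def)
  qed
  moreover have fc: "c \<in> B \<Longrightarrow> f c = (if c = b then 1 else 0)" for c
    unfolding f_def by (rule vsp.construct_basis[OF B])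
  show ?thesis by (rule exI[of _ w]) (simp add: dw fc)
qed


lemma card_field_ge2: "2 \<le> CARD('a::{finite,field})"
proof -
  have "card {0::'a, 1} = 2" by simp
  moreover have "card {0::'a, 1} \<le> CARD('a)" by (rule card_mono) auto
  ultimately show ?thesis by simp
qed

lemma dotp_diff_right: "dotp y (x - x') = dotp y x - dotp y x'"
  by (simp add: dotp_def algebra_simps sum_subtractf)

lemma dotp_sum_right: "finite S \<Longrightarrow> dotp y (\<Sum>b\<in>S. f b) = (\<Sum>b\<in>S. dotp y (f b))"
  by (induction S rule: finite_induct) (simp_all add: dotp_add_right)

lemma card_by_fibers:
  fixes f :: "'b::finite \<Rightarrow> 'c"
  assumes "\<And>g. g \<in> range f \<Longrightarrow> card (f -` {g}) = c"
  shows "CARD('b) = card (range f) * c"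
proof -
  have "UNIV = (\<Union>g\<in>range f. f -` {g})" by auto
  then have "CARD('b) = card (\<Union>g\<in>range f. f -` {g})" by simp
  also have "\<dots> = (\<Sum>g\<in>range f. card (f -` {g}))"
    by (rule card_UN_disjoint) auto
  also have "\<dots> = card (range f) * c" using assms by simp
  finally show ?thesis .
qed

lemma vdim_orth:
  fixes X :: "('a::{finite,field}^'n) set"
  assumes X: "subsp X"
  shows "vdim (orth X) + vdim X = CARD('n)"
proof -
  obtain B where B: "finite B" "B \<subseteq> X" "vec.independent B" "vec.span B = X" "card B = vec.dim X"
    using vec.basis_subspace_exists[of X] X unfolding subsp_vec by metis
  have oX: "orth X = orth B" using orth_span[of B] B by simp
  have "\<forall>b\<in>B. \<exists>w. \<forall>c\<in>B. dotp c w = (if c = b then 1 else 0)"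
    using dual_vector[OF B(3)] by blast
  then obtain w where w: "\<And>b c. b \<in> B \<Longrightarrow> c \<in> B \<Longrightarrow> dotp c (w b) = (if c = b then 1 else 0)"
    by metis
  define F where "F y = (\<lambda>b. if b \<in> B then dotp b y else (undefined::'a))" for y :: "'a^'n"
  have range: "range F = Pi\<^sub>E B (\<lambda>_. UNIV)"
  proof
    show "range F \<subseteq> Pi\<^sub>E B (\<lambda>_. UNIV)" by (auto simp: F_def PiE_def extensional_def)
    show "Pi\<^sub>E B (\<lambda>_. UNIV) \<subseteq> range F"
    proof
      fix g assume g: "g \<in> Pi\<^sub>E B (\<lambda>_. (UNIV :: 'a set))"
      define y where "y = (\<Sum>b\<in>B. g b *s w b)"
      have "F y = g"
      proof
        fix c
        show "F y c = g c"
        proof (cases "c \<in> B")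
          case True
          have "dotp c y = (\<Sum>b\<in>B. g b * dotp c (w b))"
            unfolding y_def by (simp add: dotp_sum_right[OF B(1)] dotp_scale_right)
          also have "\<dots> = (\<Sum>b\<in>B. if b = c then g b else 0)"
            by (rule sum.cong) (auto simp: w True)
          also have "\<dots> = g c" using True B(1) by simp
          finally show ?thesis using True by (simp add: F_def)
        next
          case False
          then show ?thesis using g by (simp add: F_def PiE_def extensional_def)
        qed
      qed
      then show "g \<in> range F" by blast
    qed
  qed
  have fib: "card (F -` {g}) = card (orth B)" if "g \<in> range F" for g
  proof -
    obtain y0 where y0: "g = F y0" using \<open>g \<in> range F\<close> by blast
    have "F -` {g} = (\<lambda>k. y0 + k) ` orth B"
    proof
      show "F -` {g} \<subseteq> (\<lambda>k. y0 + k) ` orth B"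
      proof
        fix y assume "y \<in> F -` {g}"
        then have "F y = F y0" using y0 by simp
        then have "dotp b y = dotp b y0" if "b \<in> B" for b
          using that unfolding F_def by (metis (mono_tags))
        then have "y - y0 \<in> orth B"
          by (auto simp: orth_dotp dotp_diff_right)
        then show "y \<in> (\<lambda>k. y0 + k) ` orth B" by (intro image_eqI[of _ _ "y - y0"]) auto
      qed
      show "(\<lambda>k. y0 + k) ` orth B \<subseteq> F -` {g}"
        using y0 by (auto simp: F_def orth_dotp fun_eq_iff dotp_add_right)
    qed
    moreover have "inj_on (\<lambda>k. y0 + k) (orth B)" by (rule inj_onI) simp
    ultimately show ?thesis by (simp add: card_image)
  qed
  have "CARD('a^'n) = card (range F) * card (orth B)"
    by (rule card_by_fibers) (rule fib)
  also have "card (range F) = CARD('a) ^ card B"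
    unfolding range using B(1) by (simp add: card_PiE)
  also have "card (orth B) = CARD('a) ^ vdim (orth X)"
    using card_subsp[OF subsp_orth[of X]] oX by simp
  finally have e: "CARD('a) ^ CARD('n) = CARD('a) ^ (card B + vdim (orth X))"
    using card_subsp[OF subsp_UNIV] vdim_UNIV[where 'a='a and 'n='n] by (simp add: power_add)
  have "CARD('n) = card B + vdim (orth X)"
    using power_inject_exp[of "CARD('a)"] e card_field_ge2[where 'a='a] by simp
  then show ?thesis using B(5) unfolding vdim_vec by simp
qed

lemma orth_orth:
  fixes X :: "('a::{finite,field}^'n) set"
  assumes X: "subsp X"
  shows "orth (orth X) = X"
proof -
  have "vdim (orth (orth X)) + vdim (orth X) = CARD('n)" by (rule vdim_orth[OF subsp_orth])
  moreover have "vdim (orth X) + vdim X = CARD('n)" by (rule vdim_orth[OF X])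
  ultimately have "vdim (orth (orth X)) = vdim X" by simp
  then show ?thesis using subsp_eq_dim[OF X subsp_orth subset_orth_orth] by simp
qed


fun lil :: "('a::field^'n) list \<Rightarrow> bool" where
  "lil [] = True"
| "lil (v # vs) = (v \<notin> vec.span (set vs) \<and> lil vs)"

lemma lil_props: "lil vs \<Longrightarrow> distinct vs \<and> vec.independent (set vs) \<and> vec.dim (vec.span (set vs)) = length vs"
proof (induction vs)
  case Nil
  then show ?case by (simp add: vec.independent_empty)
next
  case (Cons v vs)
  then have v: "v \<notin> vec.span (set vs)" and IH: "distinct vs" "vec.independent (set vs)" by auto
  have "v \<notin> set vs" using v vec.span_superset by blast
  moreover have ind: "vec.independent (insert v (set vs))" using vec.independent_insertI[OF v IH(2)] .
  moreover have "vec.dim (vec.span (insert v (set vs))) = Suc (length vs)"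
    using vec.dim_span_eq_card_independent[OF ind] \<open>v \<notin> set vs\<close> IH(1)
    by (simp add: distinct_card)
  ultimately show ?case using IH by simp
qed

definition ilists :: "('a::field^'n) set \<Rightarrow> nat \<Rightarrow> ('a^'n) list set" where
  "ilists U k = {vs. length vs = k \<and> set vs \<subseteq> U \<and> lil vs}"

lemma finite_ilists: "finite (ilists (U :: ('a::{finite,field}^'n) set) k)"
proof (rule finite_subset)
  show "ilists U k \<subseteq> {xs. set xs \<subseteq> UNIV \<and> length xs = k}" unfolding ilists_def by auto
  show "finite {xs. set xs \<subseteq> (UNIV :: ('a^'n) set) \<and> length xs = k}"
    by (rule finite_lists_length_eq) simp
qed

lemma ilists_Suc: "ilists U (Suc k) = (\<Union>vs\<in>ilists U k. (\<lambda>v. v # vs) ` (U - vec.span (set vs)))"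
proof (rule set_eqI)
  fix xs
  show "xs \<in> ilists U (Suc k) \<longleftrightarrow> xs \<in> (\<Union>vs\<in>ilists U k. (\<lambda>v. v # vs) ` (U - vec.span (set vs)))"
    by (cases xs) (auto simp: ilists_def)
qed

lemma card_ilists:
  fixes U :: "('a::{finite,field}^'n) set"
  assumes U: "subsp U"
  shows "card (ilists U k) = (\<Prod>i<k. CARD('a) ^ vdim U - CARD('a) ^ i)"
proof (induction k)
  case 0
  have "ilists U 0 = {[]}" by (auto simp: ilists_def)
  then show ?case by simp
next
  case (Suc k)
  have fin: "finite (ilists U k)" by (rule finite_ilists)
  have "card (ilists U (Suc k)) = (\<Sum>vs\<in>ilists U k. card ((\<lambda>v. v # vs) ` (U - vec.span (set vs))))"
    unfolding ilists_Suc by (rule card_UN_disjoint[OF fin]) auto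
  also have "\<dots> = (\<Sum>vs\<in>ilists U k. CARD('a) ^ vdim U - CARD('a) ^ k)"
  proof (rule sum.cong[OF refl])
    fix vs assume vs: "vs \<in> ilists U k"
    have sub: "vec.span (set vs) \<subseteq> U"
      using vs U unfolding ilists_def subsp_vec by (simp add: vec.span_minimal)
    have dim: "vdim (vec.span (set vs)) = k" using vs lil_props unfolding ilists_def vdim_vec by auto
    have "card ((\<lambda>v. v # vs) ` (U - vec.span (set vs))) = card (U - vec.span (set vs))"
      by (rule card_image) (auto simp: inj_on_def)
    also have "\<dots> = card U - card (vec.span (set vs))"
      using sub by (simp add: card_Diff_subset)
    also have "\<dots> = CARD('a) ^ vdim U - CARD('a) ^ k"
      using card_subsp[OF U] card_subsp[OF subsp_span[of "set vs"]] dim by simp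
    finally show "card ((\<lambda>v. v # vs) ` (U - vec.span (set vs))) = CARD('a) ^ vdim U - CARD('a) ^ k" .
  qed
  also have "\<dots> = card (ilists U k) * (CARD('a) ^ vdim U - CARD('a) ^ k)" by simp
  finally show ?case using Suc.IH by (simp add: mult.commute)
qed

lemma ilists_span:
  fixes U :: "('a::{finite,field}^'n) set"
  assumes U: "subsp U"
  shows "ilists U (vdim U) = {vs. length vs = vdim U \<and> lil vs \<and> vec.span (set vs) = U}"
proof (rule set_eqI)
  fix vs
  show "vs \<in> ilists U (vdim U) \<longleftrightarrow> vs \<in> {vs. length vs = vdim U \<and> lil vs \<and> vec.span (set vs) = U}"
  proof
    assume vs: "vs \<in> ilists U (vdim U)"
    have sub: "vec.span (set vs) \<subseteq> U"
      using vs U unfolding ilists_def subsp_vec by (simp add: vec.span_minimal)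
    have dim: "vdim (vec.span (set vs)) = vdim U" using vs lil_props[of vs] unfolding ilists_def vdim_vec by simp
    have "vec.span (set vs) = U" using subsp_eq_dim[OF subsp_span U sub] dim by simp
    then show "vs \<in> {vs. length vs = vdim U \<and> lil vs \<and> vec.span (set vs) = U}"
      using vs unfolding ilists_def by simp
  next
    assume "vs \<in> {vs. length vs = vdim U \<and> lil vs \<and> vec.span (set vs) = U}"
    then show "vs \<in> ilists U (vdim U)" unfolding ilists_def using vec.span_superset by auto
  qed
qed

lemma count_subspaces_nat:
  fixes U :: "('a::{finite,field}^'n) set"
  assumes U: "subsp U"
  shows "card {V. subsp V \<and> V \<subseteq> U \<and> vdim V = j} * (\<Prod>i<j. CARD('a) ^ j - CARD('a) ^ i)
         = (\<Prod>i<j. CARD('a) ^ vdim U - CARD('a) ^ i)"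
proof -
  let ?S = "{V. subsp V \<and> V \<subseteq> U \<and> vdim V = j}"
  have fin: "finite ?S" by simp
  have eq: "ilists U j = (\<Union>V\<in>?S. ilists V j)"
  proof (rule set_eqI)
    fix vs
    show "vs \<in> ilists U j \<longleftrightarrow> vs \<in> (\<Union>V\<in>?S. ilists V j)"
    proof
      assume vs: "vs \<in> ilists U j"
      let ?V = "vec.span (set vs)"
      have "?V \<in> ?S" using vs U lil_props[of vs] subsp_span[of "set vs"]
        unfolding ilists_def subsp_vec vdim_vec by (auto simp: vec.span_minimal)
      moreover have "vs \<in> ilists ?V j" using vs vec.span_superset unfolding ilists_def by auto
      ultimately show "vs \<in> (\<Union>V\<in>?S. ilists V j)" by blast
    next
      assume "vs \<in> (\<Union>V\<in>?S. ilists V j)"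
      then show "vs \<in> ilists U j" unfolding ilists_def by auto
    qed
  qed
  have disj: "\<And>V W. V \<in> ?S \<Longrightarrow> W \<in> ?S \<Longrightarrow> V \<noteq> W \<Longrightarrow> ilists V j \<inter> ilists W j = {}"
  proof -
    fix V W assume V: "V \<in> ?S" and W: "W \<in> ?S" and ne: "V \<noteq> W"
    have "vs \<in> ilists V j \<Longrightarrow> vec.span (set vs) = V" for vs
      using ilists_span[of V] V by auto
    moreover have "vs \<in> ilists W j \<Longrightarrow> vec.span (set vs) = W" for vs
      using ilists_span[of W] W by auto
    ultimately show "ilists V j \<inter> ilists W j = {}" using ne by blast
  qed
  have "card (ilists U j) = (\<Sum>V\<in>?S. card (ilists V j))"
    unfolding eq
    apply (rule card_UN_disjoint[OF fin])
     apply (simp add: finite_ilists)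
    using disj by blast
  also have "\<dots> = (\<Sum>V\<in>?S. \<Prod>i<j. CARD('a) ^ j - CARD('a) ^ i)"
    by (rule sum.cong[OF refl]) (simp add: card_ilists)
  finally show ?thesis using card_ilists[OF U, of j] by (simp add: mult.commute)
qed

lemma count_subspaces:
  fixes U :: "('a::{finite,field}^'n) set"
  assumes U: "subsp U"
  shows "real (card {V. subsp V \<and> V \<subseteq> U \<and> vdim V = j}) = qbinom CARD('a) (vdim U) j"
proof -
  let ?q = "CARD('a)"
  let ?l = "vdim U"
  have q2: "2 \<le> ?q" by (rule card_field_ge2)
  show ?thesis
  proof (cases "j \<le> ?l")
    case True
    have pos: "(\<Prod>i<j. real ?q ^ j - real ?q ^ i) \<noteq> 0"
    proof -
      have lt: "real ?q ^ i < real ?q ^ j" if "i < j" for i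
        using q2 that by (intro power_strict_increasing) auto
      have ne: "real ?q ^ j - real ?q ^ i \<noteq> 0" if "i < j" for i using lt[OF that] by simp
      show ?thesis by (subst prod_zero_iff) (auto dest: ne)
    qed
    have conv: "real (\<Prod>i<k. ?q ^ m - ?q ^ i) = (\<Prod>i<k. real ?q ^ m - real ?q ^ i)" if "k \<le> m" for k m
    proof -
      have "real (?q ^ m - ?q ^ i) = real ?q ^ m - real ?q ^ i" if "i < k" for i
      proof -
        have "?q ^ i \<le> ?q ^ m" using \<open>k \<le> m\<close> that q2 by (intro power_increasing) auto
        then show ?thesis by (simp add: of_nat_diff)
      qed
      then show ?thesis by (simp add: of_nat_prod)
    qed
    have "real (card {V. subsp V \<and> V \<subseteq> U \<and> vdim V = j}) * (\<Prod>i<j. real ?q ^ j - real ?q ^ i)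
        = (\<Prod>i<j. real ?q ^ ?l - real ?q ^ i)"
    proof -
      have "real (card {V. subsp V \<and> V \<subseteq> U \<and> vdim V = j} * (\<Prod>i<j. ?q ^ j - ?q ^ i))
          = real (\<Prod>i<j. ?q ^ ?l - ?q ^ i)"
        using count_subspaces_nat[OF U, of j] by (simp only:)
      then show ?thesis unfolding of_nat_mult conv[of j j, OF order.refl] conv[of j ?l, OF True] .
    qed
    then have "real (card {V. subsp V \<and> V \<subseteq> U \<and> vdim V = j})
        = (\<Prod>i<j. real ?q ^ ?l - real ?q ^ i) / (\<Prod>i<j. real ?q ^ j - real ?q ^ i)"
      using pos by (simp add: eq_divide_eq)
    also have "\<dots> = qbinom ?q ?l j" unfolding qbinom_def by (rule prod_dividef[symmetric])
    finally show ?thesis .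
  next
    case False
    have "{V. subsp V \<and> V \<subseteq> U \<and> vdim V = j} = {}"
    proof (rule ccontr)
      assume "{V. subsp V \<and> V \<subseteq> U \<and> vdim V = j} \<noteq> {}"
      then obtain V where "V \<subseteq> U" "vdim V = j" by blast
      then show False using False vdim_mono[of V U] by simp
    qed
    moreover have "qbinom ?q ?l j = 0"
      unfolding qbinom_def using False by (intro prod_zero) (auto intro!: bexI[of _ ?l])
    ultimately show ?thesis by simp
  qed
qed


definition qf :: "nat \<Rightarrow> nat \<Rightarrow> real" where
  "qf q m = (\<Prod>t<m. real q ^ Suc t - 1)"

definition qP :: "nat \<Rightarrow> nat \<Rightarrow> nat \<Rightarrow> real" where
  "qP q m k = (\<Prod>i<k. real q ^ (m - i) - 1)"

lemma qf_Suc: "qf q (Suc m) = qf q m * (real q ^ Suc m - 1)"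
  by (simp add: qf_def)

lemma qpow_gt1: "2 \<le> q \<Longrightarrow> 1 \<le> m \<Longrightarrow> real q ^ m - 1 > 0"
proof -
  assume q: "2 \<le> q" and m: "1 \<le> m"
  have h: "real q ^ 1 \<le> real q ^ m" using q m by (intro power_increasing) auto
  have h2: "(2::real) \<le> real q" using q by simp
  from h h2 show ?thesis unfolding power_one_right by linarith
qed

lemma qf_0[simp]: "qf q 0 = 1" by (simp add: qf_def)

lemma qf_pos: "2 \<le> q \<Longrightarrow> qf q m > 0"
proof -
  assume q: "2 \<le> q"
  have "real q ^ Suc t - 1 > 0" for t by (rule qpow_gt1[OF q]) simp
  then show ?thesis unfolding qf_def by (intro prod_pos) auto
qed

lemma qP_qf: "k \<le> d \<Longrightarrow> qP q d k * qf q (d - k) = qf q d"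
proof (induction k)
  case 0
  then show ?case by (simp add: qP_def)
next
  case (Suc k)
  have "qf q (d - k) = qf q (d - Suc k) * (real q ^ (d - k) - 1)"
    using Suc.prems qf_Suc[of q "d - Suc k"] by (simp add: Suc_diff_Suc)
  then have "qP q d (Suc k) * qf q (d - Suc k) = qP q d k * qf q (d - k)"
    by (simp add: qP_def)
  then show ?case using Suc by simp
qed

lemma prod_split_pow:
  assumes "k \<le> m"
  shows "(\<Prod>i<k. real q ^ m - real q ^ i) = (\<Prod>i<k. real q ^ i) * qP q m k"
proof -
  have "real q ^ m - real q ^ i = real q ^ i * (real q ^ (m - i) - 1)" if "i < k" for i
  proof -
    have "real q ^ m = real q ^ i * real q ^ (m - i)"
      using that assms by (simp add: power_add[symmetric])
    then show ?thesis by (simp add: algebra_simps)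
  qed
  then have "(\<Prod>i<k. real q ^ m - real q ^ i) = (\<Prod>i<k. real q ^ i * (real q ^ (m - i) - 1))"
    by (intro prod.cong) auto
  then show ?thesis by (simp add: qP_def prod.distrib)
qed

lemma qbinom_qf:
  assumes q: "2 \<le> q" and kd: "k \<le> d"
  shows "qbinom q d k = qf q d / (qf q k * qf q (d - k))"
proof -
  have "qbinom q d k = (\<Prod>i<k. real q ^ d - real q ^ i) / (\<Prod>i<k. real q ^ k - real q ^ i)"
    unfolding qbinom_def by (rule prod_dividef)
  also have "\<dots> = ((\<Prod>i<k. real q ^ i) * qP q d k) / ((\<Prod>i<k. real q ^ i) * qP q k k)"
    using prod_split_pow[OF kd] prod_split_pow[of k k] by simp
  also have "\<dots> = qP q d k / qP q k k"
  proof -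
    have "(\<Prod>i<k. real q ^ i) > 0" using q by (intro prod_pos) simp
    then show ?thesis by (metis less_irrefl mult_divide_mult_cancel_left)
  qed
  also have "qP q k k = qf q k" using qP_qf[of k k q] by (simp add: qf_def)
  also have "qP q d k = qf q d / qf q (d - k)"
    using qP_qf[OF kd, of q] qf_pos[OF q, of "d - k"] by (simp add: eq_divide_eq)
  finally show ?thesis by simp
qed

lemma qbinom_diag: "2 \<le> q \<Longrightarrow> qbinom q m m = 1"
  using qbinom_qf[of q m m] qf_pos[of q m] by simp

lemma qbinom_zero_gt: "d < k \<Longrightarrow> qbinom q d k = 0"
  unfolding qbinom_def by (intro prod_zero) (auto intro!: bexI[of _ d])

lemma qbinom_0[simp]: "qbinom q d 0 = 1"
  by (simp add: qbinom_def)

lemma qbinom_pascal: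
  assumes q: "2 \<le> q" and k: "k \<le> d"
  shows "qbinom q (Suc d) (Suc k) = qbinom q d (Suc k) + real q ^ (d - k) * qbinom q d k"
proof (cases "k = d")
  case True
  have "qbinom q (Suc d) (Suc d) = 1" by (rule qbinom_diag[OF q])
  moreover have "qbinom q d d = 1" by (rule qbinom_diag[OF q])
  ultimately show ?thesis using True qbinom_zero_gt[of d "Suc d" q] by simp
next
  case False
  then have kd: "Suc k \<le> d" using k by simp
  define a where "a = qf q k"
  define b where "b = qf q (d - Suc k)"
  define c where "c = qf q d"
  have a: "a > 0" unfolding a_def using qf_pos[OF q] .
  have b: "b > 0" unfolding b_def using qf_pos[OF q] .
  have c: "c > 0" unfolding c_def using qf_pos[OF q] .
  have e1: "qf q (Suc k) = a * (real q ^ Suc k - 1)" unfolding a_def by (rule qf_Suc)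
  have e2: "qf q (d - k) = b * (real q ^ (d - k) - 1)"
    unfolding b_def using qf_Suc[of q "d - Suc k"] kd by (simp add: Suc_diff_Suc)
  have e3: "qf q (Suc d) = c * (real q ^ Suc d - 1)" unfolding c_def by (rule qf_Suc)
  have L: "qbinom q (Suc d) (Suc k) = c * (real q ^ Suc d - 1) / (a * (real q ^ Suc k - 1) * (b * (real q ^ (d - k) - 1)))"
    using qbinom_qf[OF q, of "Suc k" "Suc d"] k e1 e2 e3 by simp
  have R1: "qbinom q d (Suc k) = c / (a * (real q ^ Suc k - 1) * b)"
    using qbinom_qf[OF q kd] e1 unfolding b_def c_def by simp
  have R2: "qbinom q d k = c / (a * (b * (real q ^ (d - k) - 1)))"
    using qbinom_qf[OF q k] e2 unfolding a_def c_def by simp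
  have p1: "real q ^ Suc k - 1 > 0" using qpow_gt1[OF q, of "Suc k"] by simp
  have p2: "real q ^ (d - k) - 1 > 0" using qpow_gt1[OF q, of "d - k"] kd by simp
  have pw: "real q ^ Suc d = real q ^ (d - k) * real q ^ Suc k"
    using kd by (simp add: power_add[symmetric])
  have aux0: "\<And>a b c u v::real. a > 0 \<Longrightarrow> b > 0 \<Longrightarrow> u > 0 \<Longrightarrow> v > 0 \<Longrightarrow>
     c * ((v + 1) * (u + 1) - 1) / (a * u * (b * v)) = c / (a * u * b) + (v + 1) * (c / (a * (b * v)))"
    by (simp add: field_simps)
  have aux: "\<And>a b c x y::real. a > 0 \<Longrightarrow> b > 0 \<Longrightarrow> y - 1 > 0 \<Longrightarrow> x - 1 > 0 \<Longrightarrow>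
     c * (x * y - 1) / (a * (y - 1) * (b * (x - 1))) = c / (a * (y - 1) * b) + x * (c / (a * (b * (x - 1))))"
    using aux0 by (metis diff_add_cancel)
  show ?thesis
    unfolding L R1 R2 pw using aux[OF a b p1 p2] by simp
qed

definition Sq :: "nat \<Rightarrow> nat \<Rightarrow> real" where
  "Sq q d = (\<Sum>k\<le>d. qbinom q d k * (-1) ^ k * real q ^ (k choose 2))"

lemma zero_choose2[simp]: "(0::nat) choose 2 = 0" by (simp add: binomial_eq_0)

lemma choose2_Suc: "Suc k choose 2 = (k choose 2) + k"
  by (simp add: numeral_2_eq_2)

lemma Sq_Suc:
  assumes q: "2 \<le> q"
  shows "Sq q (Suc d) = (1 - real q ^ d) * Sq q d"
proof -
  let ?f = "\<lambda>k. (-1::real) ^ k * real q ^ (k choose 2)"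
  have "Sq q (Suc d) = 1 + (\<Sum>m\<le>d. qbinom q (Suc d) (Suc m) * ?f (Suc m))"
    unfolding Sq_def by (subst sum.atMost_Suc_shift) (simp add: mult.assoc)
  also have "\<dots> = 1 + (\<Sum>m\<le>d. qbinom q d (Suc m) * ?f (Suc m))
                    + (\<Sum>m\<le>d. real q ^ (d - m) * qbinom q d m * ?f (Suc m))"
  proof -
    have "(\<Sum>m\<le>d. qbinom q (Suc d) (Suc m) * ?f (Suc m)) =
          (\<Sum>m\<le>d. qbinom q d (Suc m) * ?f (Suc m) + real q ^ (d - m) * qbinom q d m * ?f (Suc m))"
      by (intro sum.cong refl) (simp add: qbinom_pascal[OF q] distrib_right)
    then show ?thesis by (simp only: sum.distrib add.assoc)
  qed
  also have "1 + (\<Sum>m\<le>d. qbinom q d (Suc m) * ?f (Suc m)) = Sq q d"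
  proof -
    have "Sq q d = (\<Sum>k\<le>Suc d. qbinom q d k * ?f k)"
      unfolding Sq_def using qbinom_zero_gt[of d "Suc d" q] by (simp add: mult.assoc)
    also have "\<dots> = 1 + (\<Sum>m\<le>d. qbinom q d (Suc m) * ?f (Suc m))"
      by (subst sum.atMost_Suc_shift) simp
    finally show ?thesis by simp
  qed
  also have "(\<Sum>m\<le>d. real q ^ (d - m) * qbinom q d m * ?f (Suc m)) = - (real q ^ d * Sq q d)"
  proof -
    have "real q ^ (d - m) * qbinom q d m * ?f (Suc m) = - (real q ^ d * (qbinom q d m * ?f m))"
      if "m \<le> d" for m
    proof -
      have "real q ^ (d - m) * real q ^ m = real q ^ d" using that by (simp add: power_add[symmetric])
      then show ?thesis by (simp add: choose2_Suc power_add algebra_simps)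
    qed
    then have "(\<Sum>m\<le>d. real q ^ (d - m) * qbinom q d m * ?f (Suc m))
             = (\<Sum>m\<le>d. - (real q ^ d * (qbinom q d m * ?f m)))" by (intro sum.cong) auto
    also have "\<dots> = - (real q ^ d * Sq q d)" unfolding Sq_def by (simp add: sum_distrib_left sum_negf mult.assoc)
    finally show ?thesis .
  qed
  finally show ?thesis by (simp add: algebra_simps)
qed

lemma Sq_zero:
  assumes q: "2 \<le> q" and d: "1 \<le> d"
  shows "Sq q d = 0"
proof -
  obtain e where "d = Suc e" using d by (cases d) auto
  then show ?thesis
  proof (induction e arbitrary: d)
    case 0
    then show ?case using Sq_Suc[OF q, of 0] by simp
  next
    case (Suc e)
    then show ?case using Sq_Suc[OF q, of "Suc e"] by simp
  qed
qed


definition mus :: "nat \<Rightarrow> nat \<Rightarrow> real" where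
  "mus q k = (-1) ^ k * real q ^ (k choose 2)"

lemma finite_subsps: "finite (A :: ('a::finite ^ 'n) set set)"
  by simp

lemma sum_subspaces_below:
  fixes V :: "('a::{finite,field}^'n) set"
  assumes V: "subsp V" and d: "1 \<le> vdim V"
  shows "(\<Sum>U\<in>{U. subsp U \<and> U \<subseteq> V}. mus CARD('a) (vdim U)) = 0"
proof -
  let ?q = "CARD('a)"
  let ?S = "{U. subsp U \<and> U \<subseteq> V}"
  have "(\<Sum>U\<in>?S. mus ?q (vdim U)) = (\<Sum>k\<le>vdim V. \<Sum>U\<in>{U \<in> ?S. vdim U = k}. mus ?q (vdim U))"
    by (rule sum.group[symmetric]) (auto intro: vdim_mono)
  also have "\<dots> = (\<Sum>k\<le>vdim V. qbinom ?q (vdim V) k * mus ?q k)"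
  proof (rule sum.cong[OF refl])
    fix k
    have "(\<Sum>U\<in>{U \<in> ?S. vdim U = k}. mus ?q (vdim U)) = (\<Sum>U\<in>{U \<in> ?S. vdim U = k}. mus ?q k)"
      by (rule sum.cong) auto
    also have "\<dots> = real (card {U \<in> ?S. vdim U = k}) * mus ?q k" by simp
    also have "{U \<in> ?S. vdim U = k} = {U. subsp U \<and> U \<subseteq> V \<and> vdim U = k}" by auto
    finally show "(\<Sum>U\<in>{U \<in> ?S. vdim U = k}. mus ?q (vdim U)) = qbinom ?q (vdim V) k * mus ?q k"
      using count_subspaces[OF V, of k] by simp
  qed
  also have "\<dots> = Sq ?q (vdim V)" unfolding Sq_def mus_def by (simp add: mult.assoc)
  also have "\<dots> = 0" by (rule Sq_zero[OF card_field_ge2 d])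
  finally show ?thesis .
qed

lemma card_superspaces:
  fixes W :: "('a::{finite,field}^'n) set"
  assumes W: "subsp W" and True: "j \<le> CARD('n)"
  shows "real (card {V. subsp V \<and> W \<subseteq> V \<and> vdim V = CARD('n) - j})
       = qbinom CARD('a) (CARD('n) - vdim W) j"
proof -
  let ?A = "{V. subsp V \<and> W \<subseteq> V \<and> vdim V = CARD('n) - j}"
  let ?B = "{U. subsp U \<and> U \<subseteq> orth W \<and> vdim U = j}"
  have "bij_betw orth ?A ?B"
  proof (rule bij_betw_byWitness[where f' = orth])
    show "\<forall>a\<in>?A. orth (orth a) = a" using orth_orth by blast
    show "\<forall>a\<in>?B. orth (orth a) = a" using orth_orth by blast
    show "orth ` ?A \<subseteq> ?B"
    proof clarify
      fix V assume V: "subsp V" "W \<subseteq> V" "vdim V = CARD('n) - j"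
      have "vdim (orth V) = j" using vdim_orth[OF V(1)] V(3) True by simp
      then show "subsp (orth V) \<and> orth V \<subseteq> orth W \<and> vdim (orth V) = j"
        using subsp_orth orth_antimono[OF V(2)] by blast
    qed
    show "orth ` ?B \<subseteq> ?A"
    proof (rule image_subsetI)
      fix U assume "U \<in> ?B"
      then have U: "subsp U" "U \<subseteq> orth W" "vdim U = j" by auto
      have "vdim (orth U) = CARD('n) - j" using vdim_orth[OF U(1)] U(3) by simp
      moreover have "W \<subseteq> orth U" using orth_antimono[OF U(2)] orth_orth[OF W] by simp
      ultimately show "orth U \<in> ?A"
        using subsp_orth by blast
    qed
  qed
  then have "card ?A = card ?B" by (rule bij_betw_same_card)
  moreover have "vdim (orth W) = CARD('n) - vdim W" using vdim_orth[OF W] by simp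
  ultimately show ?thesis using count_subspaces[OF subsp_orth[of W], of j] by simp
qed


lemma sum_superspaces:
  fixes W :: "('a::{finite,field}^'n) set"
  assumes W: "subsp W"
  shows "(\<Sum>V\<in>{V. subsp V \<and> W \<subseteq> V}. mus CARD('a) (vdim V))
       = (\<Sum>j=0..CARD('n) - vdim W. qbinom CARD('a) (CARD('n) - vdim W) j * mus CARD('a) (CARD('n) - j))"
proof -
  let ?q = "CARD('a)" and ?n = "CARD('n)"
  let ?S = "{V. subsp V \<and> W \<subseteq> V}"
  have "(\<Sum>V\<in>?S. mus ?q (vdim V)) = (\<Sum>j=0..?n - vdim W. \<Sum>V\<in>{V \<in> ?S. ?n - vdim V = j}. mus ?q (vdim V))"
    by (rule sum.group[symmetric]) (auto intro!: diff_le_mono2 vdim_mono)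
  also have "\<dots> = (\<Sum>j=0..?n - vdim W. qbinom ?q (?n - vdim W) j * mus ?q (?n - j))"
  proof (rule sum.cong[OF refl])
    fix j assume j: "j \<in> {0..?n - vdim W}"
    have jn: "j \<le> ?n" using j by auto
    have iff: "?n - vdim V = j \<longleftrightarrow> vdim V = ?n - j" for V :: "('a^'n) set"
      using vdim_le_n[of V] jn by linarith
    have eq: "{V \<in> ?S. ?n - vdim V = j} = {V. subsp V \<and> W \<subseteq> V \<and> vdim V = ?n - j}"
      using iff by auto
    have "(\<Sum>V\<in>{V \<in> ?S. ?n - vdim V = j}. mus ?q (vdim V)) = (\<Sum>V\<in>{V \<in> ?S. ?n - vdim V = j}. mus ?q (?n - j))"
      by (rule sum.cong[OF refl]) (use iff in auto)
    also have "\<dots> = real (card {V. subsp V \<and> W \<subseteq> V \<and> vdim V = ?n - j}) * mus ?q (?n - j)"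
      unfolding eq by simp
    finally show "(\<Sum>V\<in>{V \<in> ?S. ?n - vdim V = j}. mus ?q (vdim V)) = qbinom ?q (?n - vdim W) j * mus ?q (?n - j)"
      using card_superspaces[OF W jn] by simp
  qed
  finally show ?thesis .
qed


lemma span_line_dim: "v \<noteq> 0 \<Longrightarrow> vdim (vec.span {v}) = 1"
  unfolding vdim_vec by simp

locale qmat =
  fixes rho :: "('a::{finite,field}^'n::finite) set \<Rightarrow> nat"
  assumes qm: "qmatroid rho"
begin

lemma rho_le: "subsp X \<Longrightarrow> rho X \<le> vdim X"
  using qm unfolding qmatroid_def by blast
lemma rho_mono: "subsp X \<Longrightarrow> subsp Y \<Longrightarrow> X \<subseteq> Y \<Longrightarrow> rho X \<le> rho Y"
  using qm unfolding qmatroid_def by blast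
lemma rho_submod: "subsp X \<Longrightarrow> subsp Y \<Longrightarrow> rho (vsum X Y) + rho (X \<inter> Y) \<le> rho X + rho Y"
  using qm unfolding qmatroid_def by blast
lemma rho_zero[simp]: "rho {0} = 0"
  using rho_le[OF subsp_zero] by simp

lemma rho_step1:
  assumes X: "subsp X" and Y: "subsp Y" and XY: "X \<subseteq> Y" and d: "vdim Y = Suc (vdim X)"
  shows "rho Y \<le> Suc (rho X)"
proof -
  have "X \<noteq> Y" using d by auto
  then obtain y where y: "y \<in> Y" "y \<notin> X" using XY by blast
  let ?l = "vec.span {y}"
  have l: "subsp ?l" by (rule subsp_span)
  have y0: "y \<noteq> 0" using y subsp_zero_in[OF X] by auto
  have lY: "?l \<subseteq> Y" using Y y unfolding subsp_vec by (simp add: vec.span_minimal)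
  have sub: "vsum X ?l \<subseteq> Y" by (rule vsum_least[OF X l Y XY lY])
  have "X \<subset> vsum X ?l"
  proof -
    have "y \<in> vsum X ?l" using vsum_upper2[OF X] vec.span_superset by blast
    then show ?thesis using vsum_upper1[OF l, of X] y by blast
  qed
  then have "vdim X < vdim (vsum X ?l)" by (rule subsp_psubset_dim[OF X vsum_subsp[OF X l]])
  then have "vsum X ?l = Y" using subsp_eq_dim[OF vsum_subsp[OF X l] Y sub] d by simp
  moreover have "rho ?l \<le> 1" using rho_le[OF l] span_line_dim[OF y0] by simp
  ultimately show ?thesis using rho_submod[OF X l] by simp
qed

lemma rho_diff:
  assumes X: "subsp X" and Y: "subsp Y" and XY: "X \<subseteq> Y"
  shows "rho Y \<le> rho X + (vdim Y - vdim X)"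
proof -
  have "\<forall>Y. subsp Y \<and> X \<subseteq> Y \<and> vdim Y = vdim X + k \<longrightarrow> rho Y \<le> rho X + k" for k
  proof (induction k)
    case 0
    show ?case
    proof clarify
      fix Y assume "subsp Y" "X \<subseteq> Y" "vdim Y = vdim X + 0"
      then have "X = Y" using subsp_eq_dim[OF X, of Y] by simp
      then show "rho Y \<le> rho X + 0" by simp
    qed
  next
    case (Suc k)
    show ?case
    proof clarify
      fix Y assume Y: "subsp Y" "X \<subseteq> Y" "vdim Y = vdim X + Suc k"
      obtain Z where Z: "subsp Z" "X \<subseteq> Z" "Z \<subseteq> Y" "vdim Z = vdim X + k"
        using subsp_step[OF X Y(1) Y(2), of "vdim X + k"] Y(3) by auto
      have "rho Z \<le> rho X + k" using Suc.IH Z by blast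
      moreover have "rho Y \<le> Suc (rho Z)" using rho_step1[OF Z(1) Y(1) Z(3)] Z(4) Y(3) by simp
      ultimately show "rho Y \<le> rho X + Suc k" by simp
    qed
  qed
  moreover have "vdim Y = vdim X + (vdim Y - vdim X)" using vdim_mono[OF XY] by simp
  ultimately show ?thesis using Y XY by blast
qed

lemma nullity_mono:
  assumes X: "subsp X" and Y: "subsp Y" and XY: "X \<subseteq> Y"
  shows "nullity rho X \<le> nullity rho Y"
  using rho_diff[OF X Y XY] rho_le[OF X] rho_le[OF Y] vdim_mono[OF XY]
  unfolding nullity_def by linarith

lemma nullity_step1:
  assumes X: "subsp X" and Y: "subsp Y" and XY: "X \<subseteq> Y" and d: "vdim Y = Suc (vdim X)"
  shows "nullity rho Y \<le> Suc (nullity rho X)"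
  using rho_mono[OF X Y XY] rho_le[OF X] rho_le[OF Y] d
  unfolding nullity_def by linarith

lemma nullity_ivt:
  assumes X: "subsp X" and Y: "subsp Y" and XY: "X \<subseteq> Y"
    and i: "nullity rho X \<le> i" "i \<le> nullity rho Y"
  shows "\<exists>Z. subsp Z \<and> X \<subseteq> Z \<and> Z \<subseteq> Y \<and> nullity rho Z = i"
proof -
  have "\<forall>Y. subsp Y \<and> X \<subseteq> Y \<and> vdim Y = vdim X + k \<and> i \<le> nullity rho Y \<longrightarrow>
          (\<exists>Z. subsp Z \<and> X \<subseteq> Z \<and> Z \<subseteq> Y \<and> nullity rho Z = i)" for k
  proof (induction k)
    case 0
    show ?case
    proof clarify
      fix Y assume Y: "subsp Y" "X \<subseteq> Y" "vdim Y = vdim X + 0" "i \<le> nullity rho Y"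
      then have "X = Y" using subsp_eq_dim[OF X, of Y] by simp
      then show "\<exists>Z. subsp Z \<and> X \<subseteq> Z \<and> Z \<subseteq> Y \<and> nullity rho Z = i" using X Y i(1) by auto
    qed
  next
    case (Suc k)
    show ?case
    proof clarify
      fix Y assume Y: "subsp Y" "X \<subseteq> Y" "vdim Y = vdim X + Suc k" "i \<le> nullity rho Y"
      show "\<exists>Z. subsp Z \<and> X \<subseteq> Z \<and> Z \<subseteq> Y \<and> nullity rho Z = i"
      proof (cases "nullity rho Y = i")
        case True
        then show ?thesis using Y by blast
      next
        case False
        obtain Z where Z: "subsp Z" "X \<subseteq> Z" "Z \<subseteq> Y" "vdim Z = vdim X + k"
          using subsp_step[OF X Y(1) Y(2), of "vdim X + k"] Y(3) by auto
        have "nullity rho Y \<le> Suc (nullity rho Z)" using nullity_step1[OF Z(1) Y(1) Z(3)] Z(4) Y(3) by simp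
        then have "i \<le> nullity rho Z" using False Y(4) by simp
        then show ?thesis using Suc.IH Z by blast
      qed
    qed
  qed
  moreover have "vdim Y = vdim X + (vdim Y - vdim X)" using vdim_mono[OF XY] by simp
  ultimately show ?thesis using Y XY i by blast
qed

lemma exists_cycle_below:
  assumes X: "subsp X"
  shows "\<exists>C. C \<subseteq> X \<and> qcycle_of rho (nullity rho X) C"
proof -
  have "\<forall>X. subsp X \<and> vdim X = d \<and> nullity rho X = i \<longrightarrow> (\<exists>C. C \<subseteq> X \<and> qcycle_of rho i C)" for d i
  proof (induction d rule: less_induct)
    case (less d)
    show ?case
    proof clarify
      fix X assume X: "subsp X" "d = vdim X" "i = nullity rho X"
      show "\<exists>C\<subseteq>X. qcycle_of rho (nullity rho X) C"
      proof (cases "qcycle_of rho i X")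
        case True
        then show ?thesis using X by blast
      next
        case False
        have "\<not> (\<forall>Y. subsp Y \<and> nullity rho Y = i \<and> Y \<subseteq> X \<longrightarrow> Y = X)"
          using False X unfolding qcycle_of_def by simp
        then obtain Y where Y: "subsp Y" "nullity rho Y = i" "Y \<subseteq> X" "Y \<noteq> X"
          by blast
        have "Y \<subset> X" using Y(3,4) by blast
        then have "vdim Y < d" using subsp_psubset_dim[OF Y(1) X(1)] X(2) by simp
        then have "\<exists>C. C \<subseteq> Y \<and> qcycle_of rho i C" using less.IH[of "vdim Y"] Y(1,2) by simp
        then obtain C where "C \<subseteq> Y" "qcycle_of rho i C" by blast
        then show ?thesis using Y(3) X(3) by blast
      qed
    qed
  qed
  then show ?thesis using X by blast
qed

lemma exists_circuit:
  assumes V: "subsp V" and n: "1 \<le> nullity rho V"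
  shows "\<exists>C\<in>qcircuits rho. C \<subseteq> V"
proof -
  have "nullity rho {0} = 0" by (simp add: nullity_def)
  then obtain Z where Z: "subsp Z" "Z \<subseteq> V" "nullity rho Z = 1"
    using nullity_ivt[OF subsp_zero V _ _ n] subsp_zero_in[OF V] by auto
  obtain C where "C \<subseteq> Z" "qcycle_of rho 1 C" using exists_cycle_below[OF Z(1)] Z(3) by auto
  then show ?thesis using Z unfolding qcircuits_def by blast
qed

lemma cycle_subsp: "qcycle_of rho i C \<Longrightarrow> subsp C"
  unfolding qcycle_of_def by blast
lemma cycle_nullity: "qcycle_of rho i C \<Longrightarrow> nullity rho C = i"
  unfolding qcycle_of_def by blast

lemma circuit_props: "C \<in> qcircuits rho \<Longrightarrow> subsp C \<and> nullity rho C = 1"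
  unfolding qcircuits_def qcycle_of_def by blast

lemma circuit_proper:
  assumes C: "C \<in> qcircuits rho" and Y: "subsp Y" "Y \<subseteq> C" "Y \<noteq> C"
  shows "nullity rho Y = 0"
proof -
  have "nullity rho Y \<le> 1" using nullity_mono[OF Y(1) _ Y(2)] circuit_props[OF C] by auto
  moreover have "nullity rho Y \<noteq> 1" using C Y unfolding qcircuits_def qcycle_of_def by blast
  ultimately show ?thesis by simp
qed

lemma circuit_nonzero: "C \<in> qcircuits rho \<Longrightarrow> C \<noteq> {0}"
  using circuit_props[of C] by (auto simp: nullity_def)

lemma indep_iff_nullity: "indep rho V \<longleftrightarrow> subsp V \<and> nullity rho V = 0"
  unfolding indep_def nullity_def using rho_le by force

lemma indep_iff_no_circuit:
  assumes V: "subsp V"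
  shows "indep rho V \<longleftrightarrow> \<not> (\<exists>C\<in>qcircuits rho. C \<subseteq> V)"
proof
  assume "indep rho V"
  then have n: "nullity rho V = 0" using indep_iff_nullity by blast
  show "\<not> (\<exists>C\<in>qcircuits rho. C \<subseteq> V)"
  proof
    assume "\<exists>C\<in>qcircuits rho. C \<subseteq> V"
    then obtain C where "C \<in> qcircuits rho" "C \<subseteq> V" by blast
    then show False using nullity_mono[OF _ V, of C] circuit_props n by fastforce
  qed
next
  assume "\<not> (\<exists>C\<in>qcircuits rho. C \<subseteq> V)"
  then have "nullity rho V = 0" using exists_circuit[OF V] by fastforce
  then show "indep rho V" using indep_iff_nullity V by blast
qed

lemma indep_sub: "indep rho V \<Longrightarrow> subsp U \<Longrightarrow> U \<subseteq> V \<Longrightarrow> indep rho U"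
  using nullity_mono[of U V] unfolding indep_iff_nullity by fastforce

lemma nullity_supermod:
  assumes X: "subsp X" and Y: "subsp Y"
  shows "nullity rho X + nullity rho Y \<le> nullity rho (vsum X Y) + nullity rho (X \<inter> Y)"
  using rho_submod[OF X Y] vsum_dim[OF X Y] rho_le[OF X] rho_le[OF Y]
    rho_le[OF vsum_subsp[OF X Y]] rho_le[OF subsp_Int[OF X Y]]
  unfolding nullity_def by linarith

lemma circuit_not_sub:
  assumes C: "C \<in> qcircuits rho" and H: "subsp H" and nsub: "\<not> C \<subseteq> H"
  shows "nullity rho H + 1 \<le> nullity rho (vsum H C)"
proof -
  have Cs: "subsp C" "nullity rho C = 1" using circuit_props[OF C] by auto
  have "H \<inter> C \<noteq> C" using nsub by blast
  then have "nullity rho (H \<inter> C) = 0"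
    using circuit_proper[OF C subsp_Int[OF H Cs(1)]] by blast
  then show ?thesis using nullity_supermod[OF H Cs(1)] Cs by simp
qed


lemma vspan_Union_sub: "subsp Y \<Longrightarrow> (\<And>C. C \<in> X \<Longrightarrow> C \<subseteq> Y) \<Longrightarrow> vspan (\<Union>X) \<subseteq> Y"
  unfolding vspan_vec subsp_vec by (rule vec.span_minimal) auto

lemma vspan_Union_sup: "C \<in> X \<Longrightarrow> C \<subseteq> vspan (\<Union>X)"
  unfolding vspan_vec using vec.span_superset by blast

lemma span_circuits_cycle:
  assumes X: "X \<subseteq> qcircuits rho"
  shows "qcycle_of rho (nullity rho (vspan (\<Union>X))) (vspan (\<Union>X))"
proof -
  let ?Y = "vspan (\<Union>X)"
  have Ys: "subsp ?Y" by (rule vspan_subsp)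
  have "Y' = ?Y" if Y': "subsp Y'" "nullity rho Y' = nullity rho ?Y" "Y' \<subseteq> ?Y" for Y'
  proof -
    have "C \<subseteq> Y'" if C: "C \<in> X" for C
    proof (rule ccontr)
      assume nC: "\<not> C \<subseteq> Y'"
      have Cc: "C \<in> qcircuits rho" using C X by blast
      have "nullity rho Y' + 1 \<le> nullity rho (vsum Y' C)" by (rule circuit_not_sub[OF Cc Y'(1) nC])
      moreover have "vsum Y' C \<subseteq> ?Y"
        using vsum_least[OF Y'(1) _ Ys Y'(3)] circuit_props[OF Cc] vspan_Union_sup[OF C] by blast
      then have "nullity rho (vsum Y' C) \<le> nullity rho ?Y"
        using nullity_mono[OF vsum_subsp[OF Y'(1)] Ys] circuit_props[OF Cc] by blast
      ultimately show False using Y'(2) by simp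
    qed
    then have "?Y \<subseteq> Y'" by (intro vspan_Union_sub[OF Y'(1)])
    then show ?thesis using Y'(3) by blast
  qed
  then show ?thesis unfolding qcycle_of_def using Ys by blast
qed

lemma span_circuits_in_cycles: "X \<subseteq> qcircuits rho \<Longrightarrow> vspan (\<Union>X) \<in> qcycles rho"
  using span_circuits_cycle unfolding qcycles_def by blast

lemma basis_exists:
  assumes H: "subsp H"
  shows "\<exists>B. indep rho B \<and> B \<subseteq> H \<and> rho B = rho H"
proof -
  let ?S = "{B. indep rho B \<and> B \<subseteq> H}"
  have "{0} \<in> ?S" using subsp_zero_in[OF H] by (auto simp: indep_def subsp_zero)
  then have ne: "vdim ` ?S \<noteq> {}" by blast
  have fin: "finite (vdim ` ?S)" by simp
  obtain B where B: "B \<in> ?S" "vdim B = Max (vdim ` ?S)" using Max_in[OF fin ne] by auto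
  have maxB: "vdim B' \<le> vdim B" if "B' \<in> ?S" for B' using B(2) Max_ge[OF fin] that by simp
  have Bi: "indep rho B" "B \<subseteq> H" using B by auto
  have Bs: "subsp B" using Bi unfolding indep_def by blast
  have rB: "rho B = vdim B" using Bi unfolding indep_def by blast
  have sB: "vec.span B = B" using Bs unfolding subsp_vec by (simp add: vec.span_eq_iff)
  have one: "rho (vec.span (insert v B)) = rho B" if v: "v \<in> H" for v
  proof (cases "v \<in> B")
    case True
    then have "insert v B = B" by blast
    then have "vec.span (insert v B) = B" using sB by simp
    then show ?thesis by simp
  next
    case False
    let ?B' = "vec.span (insert v B)"
    have vB: "v \<notin> vec.span B" unfolding sB using False .
    have d: "vdim ?B' = Suc (vdim B)" using vB unfolding vdim_vec by (simp add: vec.dim_insert)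
    have sub: "B \<subseteq> ?B'" by (meson subset_insertI vec.span_superset order_trans)
    have B'H: "?B' \<subseteq> H" using H v Bi unfolding subsp_vec by (simp add: vec.span_minimal)
    have ge: "rho B \<le> rho ?B'" by (rule rho_mono[OF Bs subsp_span sub])
    have le: "rho ?B' \<le> Suc (rho B)" by (rule rho_step1[OF Bs subsp_span sub d])
    have "rho ?B' \<noteq> Suc (rho B)"
    proof
      assume "rho ?B' = Suc (rho B)"
      then have "?B' \<in> ?S" using B'H d rB subsp_span by (simp add: indep_def)
      then show False using maxB[of ?B'] d by simp
    qed
    then show ?thesis using ge le by simp
  qed
  have "\<forall>Z. subsp Z \<and> B \<subseteq> Z \<and> Z \<subseteq> H \<and> vdim Z = vdim B + k \<longrightarrow> rho Z = rho B" for k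
  proof (induction k)
    case 0
    show ?case
    proof clarify
      fix Z assume "subsp Z" "B \<subseteq> Z" "Z \<subseteq> H" "vdim Z = vdim B + 0"
      then have "B = Z" using subsp_eq_dim[OF Bs, of Z] by simp
      then show "rho Z = rho B" by simp
    qed
  next
    case (Suc k)
    show ?case
    proof clarify
      fix Z assume Z: "subsp Z" "B \<subseteq> Z" "Z \<subseteq> H" "vdim Z = vdim B + Suc k"
      obtain Z' where Z': "subsp Z'" "B \<subseteq> Z'" "Z' \<subseteq> Z" "vdim Z' = vdim B + k"
        using subsp_step[OF Bs Z(1) Z(2), of "vdim B + k"] Z(4) by auto
      have rZ': "rho Z' = rho B" using Suc.IH Z' Z(3) by blast
      have "Z' \<noteq> Z" using Z'(4) Z(4) by auto
      then obtain v where v: "v \<in> Z" "v \<notin> Z'" using Z'(3) by blast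
      let ?Bv = "vec.span (insert v B)"
      have Bvs: "subsp ?Bv" by (rule subsp_span)
      have BBv: "B \<subseteq> ?Bv" by (meson subset_insertI vec.span_superset order_trans)
      have vBv: "v \<in> ?Bv" by (simp add: vec.span_base)
      have BvZ: "?Bv \<subseteq> Z" using Z v unfolding subsp_vec by (simp add: vec.span_minimal)
      have rBv: "rho ?Bv = rho B" using one[of v] v Z(3) by blast
      have sumZ: "vsum Z' ?Bv = Z"
      proof -
        have sub: "vsum Z' ?Bv \<subseteq> Z" by (rule vsum_least[OF Z'(1) Bvs Z(1) Z'(3) BvZ])
        have "Z' \<subset> vsum Z' ?Bv" using vsum_upper1[OF Bvs, of Z'] vsum_upper2[OF Z'(1), of ?Bv] vBv v(2) by blast
        then have "vdim Z' < vdim (vsum Z' ?Bv)" by (rule subsp_psubset_dim[OF Z'(1) vsum_subsp[OF Z'(1) Bvs]])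
        then show ?thesis using subsp_eq_dim[OF vsum_subsp[OF Z'(1) Bvs] Z(1) sub] Z'(4) Z(4) by simp
      qed
      have "rho B \<le> rho (Z' \<inter> ?Bv)" using rho_mono[OF Bs subsp_Int[OF Z'(1) Bvs]] Z'(2) BBv by blast
      then have "rho Z \<le> rho B" using rho_submod[OF Z'(1) Bvs] sumZ rZ' rBv by simp
      moreover have "rho B \<le> rho Z" by (rule rho_mono[OF Bs Z(1) Z(2)])
      ultimately show "rho Z = rho B" by simp
    qed
  qed
  moreover have "vdim H = vdim B + (vdim H - vdim B)" using vdim_mono[OF Bi(2)] by simp
  ultimately have "rho H = rho B" using H Bi(2) by blast
  then show ?thesis using Bi by auto
qed


lemma hyperplane_circuit:
  assumes H: "subsp H" and W: "subsp W" and HW: "H \<subseteq> W" and d: "vdim W = Suc (vdim H)"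
    and r: "rho H = rho W"
  shows "\<exists>C\<in>qcircuits rho. C \<subseteq> W \<and> \<not> C \<subseteq> H"
proof -
  obtain B where B: "indep rho B" "B \<subseteq> H" "rho B = rho H" using basis_exists[OF H] by blast
  have Bs: "subsp B" using B unfolding indep_def by blast
  have rB: "rho B = vdim B" using B unfolding indep_def by blast
  have sB: "vec.span B = B" using Bs unfolding subsp_vec by (simp add: vec.span_eq_iff)
  have "H \<noteq> W" using d by auto
  then obtain y where y: "y \<in> W" "y \<notin> H" using HW by blast
  let ?Bv = "vec.span (insert y B)"
  have Bvs: "subsp ?Bv" by (rule subsp_span)
  have yB: "y \<notin> vec.span B" unfolding sB using y B(2) by blast
  have dBv: "vdim ?Bv = Suc (vdim B)" using yB unfolding vdim_vec by (simp add: vec.dim_insert)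
  have BvW: "?Bv \<subseteq> W" using W y B(2) HW unfolding subsp_vec by (simp add: vec.span_minimal)
  have BBv: "B \<subseteq> ?Bv" by (meson subset_insertI vec.span_superset order_trans)
  have "rho ?Bv \<le> rho W" by (rule rho_mono[OF Bvs W BvW])
  then have "1 \<le> nullity rho ?Bv" using dBv rB B(3) r rho_le[OF Bvs] unfolding nullity_def by simp
  then obtain C where C: "C \<in> qcircuits rho" "C \<subseteq> ?Bv" using exists_circuit[OF Bvs] by blast
  have "\<not> C \<subseteq> H"
  proof
    assume CH: "C \<subseteq> H"
    have "?Bv \<inter> H = B"
    proof -
      have sub: "B \<subseteq> ?Bv \<inter> H" using BBv B(2) by blast
      have "?Bv \<inter> H \<subset> ?Bv" using y vec.span_base[of y "insert y B"] by blast
      then have "vdim (?Bv \<inter> H) < vdim ?Bv" by (rule subsp_psubset_dim[OF subsp_Int[OF Bvs H] Bvs])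
      then have "vdim (?Bv \<inter> H) \<le> vdim B" using dBv by simp
      then show ?thesis using subsp_eq_dim[OF Bs subsp_Int[OF Bvs H] sub] by simp
    qed
    then have "C \<subseteq> B" using C(2) CH by blast
    then show False using indep_iff_no_circuit[OF Bs] B(1) C(1) by blast
  qed
  then show ?thesis using C BvW by blast
qed

definition sc :: "('a^'n) set \<Rightarrow> ('a^'n) set" where
  "sc W = vspan (\<Union>{C \<in> qcircuits rho. C \<subseteq> W})"

lemma sc_subsp: "subsp (sc W)"
  unfolding sc_def by (rule vspan_subsp)

lemma sc_sub: "subsp W \<Longrightarrow> sc W \<subseteq> W"
  unfolding sc_def by (rule vspan_Union_sub) auto

lemma sc_cycle: "qcycle_of rho (nullity rho (sc W)) (sc W)"
  unfolding sc_def by (rule span_circuits_cycle) auto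

lemma sc_in_cycles: "sc W \<in> qcycles rho"
  using sc_cycle unfolding qcycles_def by blast

lemma circuit_sub_sc: "C \<in> qcircuits rho \<Longrightarrow> C \<subseteq> W \<Longrightarrow> C \<subseteq> sc W"
  unfolding sc_def by (rule vspan_Union_sup) auto

lemma sc_mono: "subsp W \<Longrightarrow> W \<subseteq> W' \<Longrightarrow> subsp W' \<Longrightarrow> sc W \<subseteq> sc W'"
  unfolding sc_def by (rule vspan_Union_sub[OF vspan_subsp]) (rule vspan_Union_sup, blast)

lemma sc_nullity:
  assumes W: "subsp W"
  shows "nullity rho (sc W) = nullity rho W"
proof -
  have "\<forall>W :: ('a^'n) set. subsp W \<and> vdim W = d \<longrightarrow> nullity rho (sc W) = nullity rho W" for d
  proof (induction d rule: less_induct)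
    case (less d)
    show ?case
    proof clarify
      fix W :: "('a^'n) set" assume W: "subsp W" "d = vdim W"
      show "nullity rho (sc W) = nullity rho W"
      proof (cases "sc W = W")
        case True
        then show ?thesis by simp
      next
        case False
        then have ps: "sc W \<subset> W" using sc_sub[OF W(1)] by blast
        then have "vdim (sc W) < vdim W" by (rule subsp_psubset_dim[OF sc_subsp W(1)])
        then have le1: "vdim (sc W) \<le> vdim W - 1" by simp
        obtain H where H: "subsp H" "sc W \<subseteq> H" "H \<subseteq> W" "vdim H = vdim W - 1"
          using subsp_step[OF sc_subsp W(1) sc_sub[OF W(1)] le1] by auto
        have dW: "vdim W = Suc (vdim H)" using H(4) \<open>vdim (sc W) < vdim W\<close> by simp
        have "rho H \<noteq> rho W"
        proof
          assume "rho H = rho W"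
          then obtain C where C: "C \<in> qcircuits rho" "C \<subseteq> W" "\<not> C \<subseteq> H"
            using hyperplane_circuit[OF H(1) W(1) H(3) dW] by blast
          then show False using circuit_sub_sc[OF C(1,2)] H(2) by blast
        qed
        then have "rho W = Suc (rho H)"
          using rho_mono[OF H(1) W(1) H(3)] rho_step1[OF H(1) W(1) H(3) dW] by simp
        then have nH: "nullity rho H = nullity rho W"
          using dW rho_le[OF H(1)] rho_le[OF W(1)] unfolding nullity_def by simp
        have "sc H = sc W"
        proof -
          have "{C \<in> qcircuits rho. C \<subseteq> H} = {C \<in> qcircuits rho. C \<subseteq> W}"
            using H(2,3) circuit_sub_sc[of _ W] by blast
          then show ?thesis unfolding sc_def by simp
        qed
        moreover have "nullity rho (sc H) = nullity rho H"
          using less.IH[of "vdim H"] H(1) dW W(2) by simp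
        ultimately show ?thesis using nH by simp
      qed
    qed
  qed
  then show ?thesis using W by blast
qed

lemma cycle_sc:
  assumes "qcycle_of rho i y"
  shows "sc y = y"
proof -
  have y: "subsp y" "nullity rho y = i" using assms unfolding qcycle_of_def by auto
  have "nullity rho (sc y) = i" using sc_nullity[OF y(1)] y(2) by simp
  then show ?thesis using assms sc_sub[OF y(1)] sc_subsp unfolding qcycle_of_def by blast
qed

lemma cycles_sc: "y \<in> qcycles rho \<Longrightarrow> sc y = y"
  unfolding qcycles_def using cycle_sc by blast

lemma cycles_subsp: "y \<in> qcycles rho \<Longrightarrow> subsp y"
  unfolding qcycles_def qcycle_of_def by blast

lemma cycles_strict:
  assumes x: "x \<in> qcycles rho" and y: "y \<in> qcycles rho" and xy: "x \<subset> y"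
  shows "nullity rho x < nullity rho y"
proof -
  have "nullity rho x \<le> nullity rho y" using nullity_mono[OF cycles_subsp[OF x] cycles_subsp[OF y]] xy by blast
  moreover have "nullity rho x \<noteq> nullity rho y"
    using y x xy unfolding qcycles_def qcycle_of_def by blast
  ultimately show ?thesis by simp
qed

lemma zero_cycle: "{0} \<in> qcycles rho"
proof -
  have "qcycle_of rho 0 {0}"
    unfolding qcycle_of_def using subsp_zero subsp_zero_in by (auto simp: nullity_def)
  then show ?thesis unfolding qcycles_def by blast
qed

lemma cycle_nonzero_circuit:
  assumes y: "y \<in> qcycles rho" and ne: "y \<noteq> {0}"
  shows "\<exists>C\<in>qcircuits rho. C \<subseteq> y"
proof -
  have ys: "subsp y" by (rule cycles_subsp[OF y])
  have "{0} \<subset> y" using subsp_zero_in[OF ys] ne by blast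
  then have "nullity rho {0} < nullity rho y" by (rule cycles_strict[OF zero_cycle y])
  then show ?thesis using exists_circuit[OF ys] by (simp add: nullity_def)
qed

end


lemma alt_pow_sum:
  assumes "finite A" "A \<noteq> {}"
  shows "(\<Sum>X\<in>Pow A. (-1::int) ^ card X) = 0"
proof -
  obtain a where a: "a \<in> A" using assms by blast
  let ?B = "A - {a}"
  have fB: "finite ?B" using assms by simp
  have A: "A = insert a ?B" using a by blast
  have "Pow A = Pow ?B \<union> insert a ` Pow ?B" using A Pow_insert by metis
  moreover have "Pow ?B \<inter> insert a ` Pow ?B = {}" by auto
  ultimately have "(\<Sum>X\<in>Pow A. (-1::int) ^ card X) = (\<Sum>X\<in>Pow ?B. (-1) ^ card X) + (\<Sum>X\<in>insert a ` Pow ?B. (-1) ^ card X)"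
    using fB by (simp add: sum.union_disjoint)
  also have "(\<Sum>X\<in>insert a ` Pow ?B. (-1::int) ^ card X) = (\<Sum>X\<in>Pow ?B. (-1) ^ card (insert a X))"
    by (rule sum.reindex_cong[of "insert a"]) (auto simp: inj_on_def)
  also have "\<dots> = (\<Sum>X\<in>Pow ?B. - ((-1) ^ card X))"
  proof (rule sum.cong[OF refl])
    fix X assume "X \<in> Pow ?B"
    then have "a \<notin> X" "finite X" using fB finite_subset by auto
    then show "(-1::int) ^ card (insert a X) = - ((-1) ^ card X)" by simp
  qed
  finally show ?thesis by (simp add: sum_negf)
qed

declare mobius.simps[simp del]

lemma mob_refl[simp]: "mobius P x x = 1"
  by (subst mobius.simps) simp

lemma mob_rec: "x \<subset> y \<Longrightarrow> mobius P x y = - (\<Sum>z\<in>{z\<in>P. x \<subseteq> z \<and> z \<subset> y}. mobius P x z)"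
  by (subst mobius.simps) auto

lemma mob_left_sum:
  fixes P :: "'b::finite set set"
  assumes x: "x \<in> P" and y: "y \<in> P" and xy: "x \<subseteq> y"
  shows "(\<Sum>w\<in>{w\<in>P. x \<subseteq> w \<and> w \<subseteq> y}. mobius P x w) = (if x = y then 1 else 0)"
proof (cases "x = y")
  case True
  then have "{w\<in>P. x \<subseteq> w \<and> w \<subseteq> y} = {x}" using x by auto
  then show ?thesis using True by simp
next
  case False
  then have xy': "x \<subset> y" using xy by blast
  have "{w\<in>P. x \<subseteq> w \<and> w \<subseteq> y} = insert y {z\<in>P. x \<subseteq> z \<and> z \<subset> y}" using y xy by auto
  then have "(\<Sum>w\<in>{w\<in>P. x \<subseteq> w \<and> w \<subseteq> y}. mobius P x w)
      = mobius P x y + (\<Sum>z\<in>{z\<in>P. x \<subseteq> z \<and> z \<subset> y}. mobius P x z)"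
    by (simp add: sum.insert_if)
  also have "\<dots> = 0" using mob_rec[OF xy'] by simp
  finally show ?thesis using False by simp
qed

lemma mob_right_sum:
  fixes P :: "'b::finite set set"
  assumes x: "x \<in> P" and y: "y \<in> P" and xy: "x \<subseteq> y"
  shows "(\<Sum>z\<in>{z\<in>P. x \<subseteq> z \<and> z \<subseteq> y}. mobius P z y) = (if x = y then 1 else 0)"
proof -
  define A where "A w = (\<Sum>z\<in>{z\<in>P. w \<subseteq> z \<and> z \<subseteq> y}. mobius P z y)" for w
  have "\<forall>x. x \<in> P \<and> x \<subseteq> y \<and> card y - card x = k \<longrightarrow> A x = (if x = y then 1 else 0)" for k
  proof (induction k rule: less_induct)
    case (less k)
    show ?case
    proof (intro allI impI)
      fix x :: "'b set" assume "x \<in> P \<and> x \<subseteq> y \<and> card y - card x = k"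
      then have x: "x \<in> P" "x \<subseteq> y" "card y - card x = k" by auto
      show "A x = (if x = y then 1 else 0)"
      proof (cases "x = y")
        case True
        then have "{z\<in>P. x \<subseteq> z \<and> z \<subseteq> y} = {y}" using y by auto
        then show ?thesis using True by (simp add: A_def)
      next
        case False
        have IH: "A w = (if w = y then 1 else 0)" if w: "w \<in> P" "x \<subset> w" "w \<subseteq> y" for w
        proof -
          have "card x < card w" using w(2) by (simp add: psubset_card_mono)
          moreover have "card w \<le> card y" using w(3) by (simp add: card_mono)
          ultimately have "card y - card w < k" using x(3) by simp
          then show ?thesis using less.IH w(1,3) by blast
        qed
        let ?I = "\<lambda>a b. {z\<in>P. a \<subseteq> z \<and> z \<subseteq> b}"
        have fin: "finite (?I x y)" by simp
        have "(\<Sum>w\<in>?I x y. mobius P x w * A w)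
            = (\<Sum>w\<in>?I x y. \<Sum>z\<in>{z \<in> ?I x y. w \<subseteq> z}. mobius P x w * mobius P z y)"
          unfolding A_def sum_distrib_left by (intro sum.cong refl) auto
        also have "\<dots> = (\<Sum>z\<in>?I x y. \<Sum>w\<in>{w \<in> ?I x y. w \<subseteq> z}. mobius P x w * mobius P z y)"
          by (rule sum.swap_restrict[OF fin fin])
        also have "\<dots> = (\<Sum>z\<in>?I x y. (if x = z then 1 else 0) * mobius P z y)"
        proof (rule sum.cong[OF refl])
          fix z assume z: "z \<in> ?I x y"
          have "{w \<in> ?I x y. w \<subseteq> z} = ?I x z" using z by auto
          then have "(\<Sum>w\<in>{w \<in> ?I x y. w \<subseteq> z}. mobius P x w * mobius P z y)
              = (\<Sum>w\<in>?I x z. mobius P x w) * mobius P z y" by (simp add: sum_distrib_right)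
          also have "\<dots> = (if x = z then 1 else 0) * mobius P z y"
            using mob_left_sum[OF x(1), of z] z by simp
          finally show "(\<Sum>w\<in>{w \<in> ?I x y. w \<subseteq> z}. mobius P x w * mobius P z y)
              = (if x = z then 1 else 0) * mobius P z y" .
        qed
        also have "\<dots> = mobius P x y"
        proof -
          have "(\<Sum>z\<in>?I x y. (if x = z then 1 else 0) * mobius P z y) = (\<Sum>z\<in>?I x y. if z = x then mobius P z y else 0)"
            by (intro sum.cong refl) auto
          also have "\<dots> = mobius P x y" using x by (simp add: sum.delta)
          finally show ?thesis .
        qed
        finally have D1: "(\<Sum>w\<in>?I x y. mobius P x w * A w) = mobius P x y" .
        have split: "?I x y = insert x (insert y {w\<in>P. x \<subset> w \<and> w \<subset> y})" using x y False by auto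
        have "(\<Sum>w\<in>?I x y. mobius P x w * A w) = A x + mobius P x y"
        proof -
          have A0: "A w = 0" if "w \<in> {w\<in>P. x \<subset> w \<and> w \<subset> y}" for w
          proof -
            have w: "w \<in> P" "x \<subset> w" "w \<subseteq> y" "w \<noteq> y" using that by auto
            show ?thesis using IH[OF w(1,2,3)] w(4) by simp
          qed
          have z: "(\<Sum>w\<in>{w\<in>P. x \<subset> w \<and> w \<subset> y}. mobius P x w * A w) = 0"
            by (intro sum.neutral ballI) (simp add: A0)
          have "x \<subset> y" using x(2) False by blast
          then have "A y = 1" using IH[of y] y by simp
          then show ?thesis unfolding split using False z by (simp add: sum.insert_if)
        qed
        then show ?thesis using D1 False by simp
      qed
    qed
  qed
  then show ?thesis using x xy unfolding A_def by blast
qed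


context qmat
begin

definition gcc :: "('a^'n) set \<Rightarrow> int" where
  "gcc y = (\<Sum>X\<in>{X. X \<subseteq> qcircuits rho \<and> vspan (\<Union>X) = y}. (-1) ^ card X)"

lemma cycles_zero_sub: "z \<in> qcycles rho \<Longrightarrow> {0} \<subseteq> z"
  using subsp_zero_in[OF cycles_subsp] by blast

lemma gcc_sum:
  assumes y: "y \<in> qcycles rho"
  shows "(\<Sum>z\<in>{z\<in>qcycles rho. {0} \<subseteq> z \<and> z \<subseteq> y}. gcc z) = (if y = {0} then 1 else 0)"
proof -
  let ?Z = "{z\<in>qcycles rho. {0} \<subseteq> z \<and> z \<subseteq> y}"
  let ?X = "{X. X \<subseteq> qcircuits rho \<and> vspan (\<Union>X) \<subseteq> y}"
  have ys: "subsp y" by (rule cycles_subsp[OF y])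
  have "(\<Sum>z\<in>?Z. gcc z) = (\<Sum>z\<in>?Z. \<Sum>X\<in>{X\<in>?X. vspan (\<Union>X) = z}. (-1) ^ card X)"
    unfolding gcc_def by (intro sum.cong refl) auto
  also have "\<dots> = (\<Sum>X\<in>?X. (-1) ^ card X)"
  proof (rule sum.group)
    show "finite ?X" by simp
    show "finite ?Z" by simp
    show "(\<lambda>X. vspan (\<Union>X)) ` ?X \<subseteq> ?Z"
      using span_circuits_in_cycles cycles_zero_sub by blast
  qed
  also have "?X = Pow {C\<in>qcircuits rho. C \<subseteq> y}"
  proof
    show "?X \<subseteq> Pow {C\<in>qcircuits rho. C \<subseteq> y}" using vspan_Union_sup by blast
    show "Pow {C\<in>qcircuits rho. C \<subseteq> y} \<subseteq> ?X"
    proof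
      fix X assume "X \<in> Pow {C\<in>qcircuits rho. C \<subseteq> y}"
      then show "X \<in> ?X" using vspan_Union_sub[OF ys, of X] by auto
    qed
  qed
  finally have e: "(\<Sum>z\<in>?Z. gcc z) = (\<Sum>X\<in>Pow {C\<in>qcircuits rho. C \<subseteq> y}. (-1) ^ card X)" .
  show ?thesis
  proof (cases "y = {0}")
    case True
    have E0: "{C\<in>qcircuits rho. C \<subseteq> y} = {}"
    proof -
      have "C = {0}" if "C \<in> qcircuits rho" "C \<subseteq> {0}" for C
      proof -
        have "0 \<in> C" using subsp_zero_in circuit_props[OF that(1)] by blast
        then show ?thesis using that(2) by blast
      qed
      then show ?thesis using True circuit_nonzero by blast
    qed
    have "(\<Sum>X\<in>Pow {C\<in>qcircuits rho. C \<subseteq> y}. (-1::int) ^ card X) = 1" unfolding E0 by simp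
    then show ?thesis using e True by simp
  next
    case False
    have "{C\<in>qcircuits rho. C \<subseteq> y} \<noteq> {}" using cycle_nonzero_circuit[OF y False] by blast
    then show ?thesis using e False alt_pow_sum[of "{C\<in>qcircuits rho. C \<subseteq> y}"] by simp
  qed
qed

lemma crosscut:
  assumes y: "y \<in> qcycles rho"
  shows "mobius (qcycles rho) {0} y = gcc y"
proof -
  have "\<forall>y. y \<in> qcycles rho \<and> card y = k \<longrightarrow> mobius (qcycles rho) {0} y = gcc y" for k
  proof (induction k rule: less_induct)
    case (less k)
    show ?case
    proof (intro allI impI)
      fix y :: "('a^'n) set" assume "y \<in> qcycles rho \<and> card y = k"
      then have y: "y \<in> qcycles rho" "card y = k" by auto
      let ?Z = "{z\<in>qcycles rho. {0} \<subseteq> z \<and> z \<subseteq> y}"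
      show "mobius (qcycles rho) {0} y = gcc y"
      proof (cases "y = {0}")
        case True
        have "?Z = {{0}}" using True zero_cycle by auto
        then show ?thesis using gcc_sum[OF y(1)] True by simp
      next
        case False
        have ps: "{0} \<subset> y" using cycles_zero_sub[OF y(1)] False by blast
        have "mobius (qcycles rho) {0} y = - (\<Sum>z\<in>{z\<in>qcycles rho. {0} \<subseteq> z \<and> z \<subset> y}. mobius (qcycles rho) {0} z)"
          by (rule mob_rec[OF ps])
        also have "\<dots> = - (\<Sum>z\<in>{z\<in>qcycles rho. {0} \<subseteq> z \<and> z \<subset> y}. gcc z)"
        proof -
          have "mobius (qcycles rho) {0} z = gcc z" if "z \<in> {z\<in>qcycles rho. {0} \<subseteq> z \<and> z \<subset> y}" for z
          proof -
            have "card z < k" using that y(2) by (auto intro: psubset_card_mono)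
            then show ?thesis using less.IH that by blast
          qed
          then show ?thesis by (intro arg_cong[of _ _ uminus] sum.cong) auto
        qed
        also have "\<dots> = gcc y"
        proof -
          have "?Z = insert y {z\<in>qcycles rho. {0} \<subseteq> z \<and> z \<subset> y}" using y(1) ps by auto
          then have "(\<Sum>z\<in>?Z. gcc z) = gcc y + (\<Sum>z\<in>{z\<in>qcycles rho. {0} \<subseteq> z \<and> z \<subset> y}. gcc z)"
            by (simp add: sum.insert_if)
          then show ?thesis using gcc_sum[OF y(1)] False by simp
        qed
        finally show ?thesis .
      qed
    qed
  qed
  then show ?thesis using y by blast
qed


lemma sc_meet:
  assumes w: "w \<in> qcycles rho" and z: "subsp z" and h: "subsp h"
  shows "w \<subseteq> sc (z \<inter> h) \<longleftrightarrow> w \<subseteq> z \<and> w \<subseteq> h"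
proof
  assume "w \<subseteq> sc (z \<inter> h)"
  then show "w \<subseteq> z \<and> w \<subseteq> h" using sc_sub[OF subsp_Int[OF z h]] by blast
next
  assume "w \<subseteq> z \<and> w \<subseteq> h"
  then have "sc w \<subseteq> sc (z \<inter> h)" using sc_mono[OF cycles_subsp[OF w] _ subsp_Int[OF z h]] by blast
  then show "w \<subseteq> sc (z \<inter> h)" using cycles_sc[OF w] by simp
qed

lemma weisner_dual:
  assumes x: "x \<in> qcycles rho" and y: "y \<in> qcycles rho" and h: "h \<in> qcycles rho"
    and xh: "x \<subseteq> h" and hy: "h \<subset> y"
  shows "(\<Sum>z\<in>{z\<in>qcycles rho. x \<subseteq> z \<and> z \<subseteq> y \<and> sc (z \<inter> h) = x}. mobius (qcycles rho) z y) = 0"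
proof -
  let ?L = "qcycles rho"
  let ?mu = "mobius ?L"
  let ?I = "\<lambda>a b. {z\<in>?L. a \<subseteq> z \<and> z \<subseteq> b}"
  have hs: "subsp h" by (rule cycles_subsp[OF h])
  have fin: "finite (?I x y)" by simp
  have step1: "(if sc (z \<inter> h) = x then 1 else 0) = (\<Sum>w\<in>{w\<in>?I x y. w \<subseteq> z \<and> w \<subseteq> h}. ?mu x w)"
    if z: "z \<in> ?I x y" for z
  proof -
    have zs: "subsp z" using z cycles_subsp by blast
    have m: "sc (z \<inter> h) \<in> ?L" by (rule sc_in_cycles)
    have xm: "x \<subseteq> sc (z \<inter> h)" using sc_meet[OF x zs hs] z xh by blast
    have "{w\<in>?I x y. w \<subseteq> z \<and> w \<subseteq> h} = ?I x (sc (z \<inter> h))"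
    proof (rule set_eqI)
      fix w
      show "w \<in> {w\<in>?I x y. w \<subseteq> z \<and> w \<subseteq> h} \<longleftrightarrow> w \<in> ?I x (sc (z \<inter> h))"
      proof
        assume "w \<in> {w\<in>?I x y. w \<subseteq> z \<and> w \<subseteq> h}"
        then have "w \<in> ?L" "x \<subseteq> w" "w \<subseteq> z" "w \<subseteq> h" by auto
        then show "w \<in> ?I x (sc (z \<inter> h))" using sc_meet[OF _ zs hs] by blast
      next
        assume "w \<in> ?I x (sc (z \<inter> h))"
        then have a: "w \<in> ?L" "x \<subseteq> w" "w \<subseteq> sc (z \<inter> h)" by auto
        then have "w \<subseteq> z" "w \<subseteq> h" using sc_meet[OF a(1) zs hs] by auto
        moreover have "z \<subseteq> y" using z by auto
        ultimately show "w \<in> {w\<in>?I x y. w \<subseteq> z \<and> w \<subseteq> h}" using a by auto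
      qed
    qed
    then show ?thesis using mob_left_sum[OF x m xm] by simp
  qed
  have "(\<Sum>z\<in>{z\<in>?L. x \<subseteq> z \<and> z \<subseteq> y \<and> sc (z \<inter> h) = x}. ?mu z y)
      = (\<Sum>z\<in>?I x y. (if sc (z \<inter> h) = x then 1 else 0) * ?mu z y)"
  proof -
    have "{z\<in>?L. x \<subseteq> z \<and> z \<subseteq> y \<and> sc (z \<inter> h) = x} = {z \<in> ?I x y. sc (z \<inter> h) = x}" by auto
    then have "(\<Sum>z\<in>{z\<in>?L. x \<subseteq> z \<and> z \<subseteq> y \<and> sc (z \<inter> h) = x}. ?mu z y)
       = (\<Sum>z\<in>?I x y. if sc (z \<inter> h) = x then ?mu z y else 0)"
      by (simp only: sum.inter_filter[OF fin])
    also have "\<dots> = (\<Sum>z\<in>?I x y. (if sc (z \<inter> h) = x then 1 else 0) * ?mu z y)"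
      by (intro sum.cong refl) simp
    finally show ?thesis .
  qed
  also have "\<dots> = (\<Sum>z\<in>?I x y. \<Sum>w\<in>{w\<in>?I x y. w \<subseteq> z \<and> w \<subseteq> h}. ?mu x w * ?mu z y)"
    by (intro sum.cong refl) (simp add: step1 sum_distrib_right)
  also have "\<dots> = (\<Sum>w\<in>?I x y. \<Sum>z\<in>{z\<in>?I x y. w \<subseteq> z \<and> w \<subseteq> h}. ?mu x w * ?mu z y)"
    by (rule sum.swap_restrict[OF fin fin])
  also have "\<dots> = 0"
  proof (rule sum.neutral, rule ballI)
    fix w assume w: "w \<in> ?I x y"
    show "(\<Sum>z\<in>{z\<in>?I x y. w \<subseteq> z \<and> w \<subseteq> h}. ?mu x w * ?mu z y) = 0"
    proof (cases "w \<subseteq> h")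
      case False
      then show ?thesis by simp
    next
      case True
      have "{z\<in>?I x y. w \<subseteq> z \<and> w \<subseteq> h} = ?I w y" using w True by auto
      then have "(\<Sum>z\<in>{z\<in>?I x y. w \<subseteq> z \<and> w \<subseteq> h}. ?mu x w * ?mu z y) = ?mu x w * (\<Sum>z\<in>?I w y. ?mu z y)"
        by (simp add: sum_distrib_left)
      also have "(\<Sum>z\<in>?I w y. ?mu z y) = 0"
        using mob_right_sum[of w ?L y] w y True hy by auto
      finally show ?thesis by simp
    qed
  qed
  finally show ?thesis .
qed

lemma rota_sign:
  assumes x: "x \<in> qcycles rho" and y: "y \<in> qcycles rho" and xy: "x \<subseteq> y"
  shows "0 \<le> (-1) ^ (nullity rho y - nullity rho x) * mobius (qcycles rho) x y"
proof -
  let ?L = "qcycles rho"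
  let ?mu = "mobius ?L"
  let ?e = "nullity rho"
  have "\<forall>x. x \<in> ?L \<and> x \<subseteq> y \<and> ?e y - ?e x = k \<longrightarrow> 0 \<le> (-1) ^ (?e y - ?e x) * ?mu x y" for k
  proof (induction k rule: less_induct)
    case (less k)
    show ?case
    proof (intro allI impI)
      fix x :: "('a^'n) set" assume "x \<in> ?L \<and> x \<subseteq> y \<and> ?e y - ?e x = k"
      then have x: "x \<in> ?L" "x \<subseteq> y" "?e y - ?e x = k" by auto
      show "0 \<le> (-1) ^ (?e y - ?e x) * ?mu x y"
      proof (cases "x = y")
        case True
        then show ?thesis by simp
      next
        case False
        have xs: "subsp x" and ys: "subsp y" using x y cycles_subsp by auto
        have ps: "x \<subset> y" using x(2) False by blast
        have lt: "?e x < ?e y" by (rule cycles_strict[OF x(1) y ps])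
        have i1: "?e x \<le> ?e y - 1" and i2: "?e y - 1 \<le> ?e y" using lt by auto
        obtain T where T: "subsp T" "x \<subseteq> T" "T \<subseteq> y" "?e T = ?e y - 1"
          using nullity_ivt[OF xs ys x(2) i1 i2] by blast
        define h where "h = sc T"
        have hL: "h \<in> ?L" unfolding h_def by (rule sc_in_cycles)
        have hs: "subsp h" unfolding h_def by (rule sc_subsp)
        have xh: "x \<subseteq> h" using sc_mono[OF xs T(2) T(1)] cycles_sc[OF x(1)] unfolding h_def by simp
        have hT: "h \<subseteq> T" unfolding h_def by (rule sc_sub[OF T(1)])
        have eh: "?e h = ?e y - 1" unfolding h_def using sc_nullity[OF T(1)] T(4) by simp
        have hy: "h \<subset> y" using hT T(3) eh lt by auto
        let ?Z = "{z\<in>?L. x \<subseteq> z \<and> z \<subseteq> y \<and> sc (z \<inter> h) = x}"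
        let ?Z' = "{z\<in>?L. x \<subset> z \<and> z \<subseteq> y \<and> sc (z \<inter> h) = x}"
        have "?Z = insert x ?Z'"
        proof -
          have "sc (x \<inter> h) = x" using xh cycles_sc[OF x(1)] by (simp add: Int_absorb2)
          then show ?thesis using x by auto
        qed
        moreover have "x \<notin> ?Z'" by blast
        ultimately have "(\<Sum>z\<in>?Z. ?mu z y) = ?mu x y + (\<Sum>z\<in>?Z'. ?mu z y)" by simp
        then have mxy: "?mu x y = - (\<Sum>z\<in>?Z'. ?mu z y)"
          using weisner_dual[OF x(1) y hL xh hy] by simp
        have ez: "?e z = Suc (?e x)" if z: "z \<in> ?Z'" for z
        proof -
          have zL: "z \<in> ?L" and xz: "x \<subset> z" and zy: "z \<subseteq> y" and m: "sc (z \<inter> h) = x" using z by auto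
          have zs: "subsp z" by (rule cycles_subsp[OF zL])
          have "?e z + ?e h \<le> ?e (vsum z h) + ?e (z \<inter> h)" by (rule nullity_supermod[OF zs hs])
          moreover have "?e (z \<inter> h) = ?e x" using sc_nullity[OF subsp_Int[OF zs hs]] m by simp
          moreover have "?e (vsum z h) \<le> ?e y"
            using nullity_mono[OF vsum_subsp[OF zs hs] ys] vsum_least[OF zs hs ys zy] hy by blast
          moreover have "?e x < ?e z" by (rule cycles_strict[OF x(1) zL xz])
          ultimately show ?thesis using eh lt by linarith
        qed
        have "0 \<le> (\<Sum>z\<in>?Z'. (-1) ^ (?e y - ?e z) * ?mu z y)"
        proof (rule sum_nonneg)
          fix z assume z: "z \<in> ?Z'"
          have "?e y - ?e z < k" using ez[OF z] x(3) lt by simp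
          moreover have "z \<in> ?L" "z \<subseteq> y" using z by auto
          ultimately show "0 \<le> (-1) ^ (?e y - ?e z) * ?mu z y" using less.IH by blast
        qed
        also have "(\<Sum>z\<in>?Z'. (-1) ^ (?e y - ?e z) * ?mu z y) = (-1) ^ (?e y - ?e x) * ?mu x y"
        proof -
          have "(-1::int) ^ (?e y - ?e z) = - ((-1) ^ (?e y - ?e x))" if z: "z \<in> ?Z'" for z
          proof -
            have "?e y - ?e x = Suc (?e y - ?e z)" using ez[OF z] lt by simp
            then show ?thesis by simp
          qed
          then have "(\<Sum>z\<in>?Z'. (-1) ^ (?e y - ?e z) * ?mu z y) = (\<Sum>z\<in>?Z'. - ((-1) ^ (?e y - ?e x) * ?mu z y))"
            by (intro sum.cong refl) simp
          also have "\<dots> = (-1) ^ (?e y - ?e x) * (- (\<Sum>z\<in>?Z'. ?mu z y))"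
            by (simp add: sum_negf sum_distrib_left)
          finally show ?thesis using mxy by simp
        qed
        finally show ?thesis .
      qed
    qed
  qed
  then show ?thesis using x xy by blast
qed

end


definition chs :: "'b set set \<Rightarrow> 'b set set set" where
  "chs F = {C. C \<subseteq> F \<and> (\<forall>V\<in>C. \<forall>W\<in>C. V \<subseteq> W \<or> W \<subseteq> V)}"

lemma chain_Union_in:
  assumes "finite C" "C \<noteq> {}" "\<forall>V\<in>C. \<forall>W\<in>C. V \<subseteq> W \<or> W \<subseteq> V"
  shows "\<Union>C \<in> C"
  using assms
proof (induction C rule: finite_ne_induct)
  case (singleton x)
  then show ?case by simp
next
  case (insert x F)
  then have u: "\<Union>F \<in> F" by blast
  then have "x \<subseteq> \<Union>F \<or> \<Union>F \<subseteq> x" using insert.prems by blast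
  then show ?case
  proof
    assume "x \<subseteq> \<Union>F"
    then have "\<Union>(insert x F) = \<Union>F" by auto
    then show ?thesis using u by simp
  next
    assume "\<Union>F \<subseteq> x"
    then have "\<Union>(insert x F) = x" by auto
    then show ?thesis by simp
  qed
qed

lemma chs_split:
  fixes F :: "'b::finite set set"
  shows "(\<Sum>C\<in>chs F. f C) = f {} + (\<Sum>V\<in>F. \<Sum>D\<in>chs {U\<in>F. U \<subset> V}. f (insert V D))"
proof -
  have fin: "finite (chs F)" by simp
  have "{} \<in> chs F" by (simp add: chs_def)
  then have "(\<Sum>C\<in>chs F. f C) = f {} + (\<Sum>C\<in>chs F - {{}}. f C)"
    by (simp add: sum.remove[OF fin])
  also have "(\<Sum>C\<in>chs F - {{}}. f C) = (\<Sum>V\<in>F. \<Sum>C\<in>{C\<in>chs F - {{}}. \<Union>C = V}. f C)"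
  proof (rule sum.group[symmetric])
    show "finite (chs F - {{}})" by simp
    show "finite F" by simp
    show "Union ` (chs F - {{}}) \<subseteq> F"
    proof
      fix V assume "V \<in> Union ` (chs F - {{}})"
      then obtain C where C: "C \<in> chs F" "C \<noteq> {}" "V = \<Union>C" by blast
      have "\<Union>C \<in> C" by (rule chain_Union_in) (use C in \<open>auto simp: chs_def\<close>)
      then show "V \<in> F" using C by (auto simp: chs_def)
    qed
  qed
  also have "\<dots> = (\<Sum>V\<in>F. \<Sum>D\<in>chs {U\<in>F. U \<subset> V}. f (insert V D))"
  proof (rule sum.cong[OF refl])
    fix V assume V: "V \<in> F"
    have "{C\<in>chs F - {{}}. \<Union>C = V} = insert V ` chs {U\<in>F. U \<subset> V}"
    proof
      show "{C\<in>chs F - {{}}. \<Union>C = V} \<subseteq> insert V ` chs {U\<in>F. U \<subset> V}"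
      proof
        fix C assume "C \<in> {C\<in>chs F - {{}}. \<Union>C = V}"
        then have C: "C \<in> chs F" "C \<noteq> {}" "\<Union>C = V" by auto
        have VC: "V \<in> C" using chain_Union_in[of C] C by (auto simp: chs_def)
        have "C - {V} \<in> chs {U\<in>F. U \<subset> V}" using C by (auto simp: chs_def)
        moreover have "C = insert V (C - {V})" using VC by blast
        ultimately show "C \<in> insert V ` chs {U\<in>F. U \<subset> V}" by blast
      qed
      show "insert V ` chs {U\<in>F. U \<subset> V} \<subseteq> {C\<in>chs F - {{}}. \<Union>C = V}"
      proof
        fix C assume "C \<in> insert V ` chs {U\<in>F. U \<subset> V}"
        then obtain D where D: "D \<in> chs {U\<in>F. U \<subset> V}" "C = insert V D" by blast
        have "C \<in> chs F" using D V by (auto simp: chs_def)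
        moreover have "\<Union>C = V" using D by (auto simp: chs_def)
        ultimately show "C \<in> {C\<in>chs F - {{}}. \<Union>C = V}" using D by auto
      qed
    qed
    moreover have "inj_on (insert V) (chs {U\<in>F. U \<subset> V})"
    proof (rule inj_onI)
      fix D D' assume "D \<in> chs {U\<in>F. U \<subset> V}" "D' \<in> chs {U\<in>F. U \<subset> V}" "insert V D = insert V D'"
      moreover then have "V \<notin> D" "V \<notin> D'" by (auto simp: chs_def)
      ultimately show "D = D'" by (metis Diff_insert_absorb)
    qed
    ultimately show "(\<Sum>C\<in>{C\<in>chs F - {{}}. \<Union>C = V}. f C) = (\<Sum>D\<in>chs {U\<in>F. U \<subset> V}. f (insert V D))"
      by (simp add: sum.reindex)
  qed
  finally show ?thesis .
qed

lemma chs_card_insert: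
  fixes F :: "'b::finite set set"
  assumes "D \<in> chs {U\<in>F. U \<subset> V}"
  shows "card (insert V D) = Suc (card D)"
proof -
  have "V \<notin> D" using assms by (auto simp: chs_def)
  moreover have "finite D" by simp
  ultimately show ?thesis by simp
qed

definition NZ :: "('a::field^'n) set \<Rightarrow> ('a^'n) set set" where
  "NZ V = {U. subsp U \<and> U \<noteq> {0} \<and> U \<subset> V}"

definition achain :: "('a::field^'n) set \<Rightarrow> real" where
  "achain V = (\<Sum>D\<in>chs (NZ V). (-1) ^ card D)"

lemma achain_formula:
  fixes V :: "('a::{finite,field}^'n) set"
  assumes V: "subsp V" "V \<noteq> {0}"
  shows "achain V = - mus CARD('a) (vdim V)"
proof -
  let ?q = "CARD('a)"
  have "\<forall>V :: ('a^'n) set. subsp V \<and> V \<noteq> {0} \<and> vdim V = d \<longrightarrow> achain V = - mus ?q (vdim V)" for d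
  proof (induction d rule: less_induct)
    case (less d)
    show ?case
    proof (intro allI impI)
      fix V :: "('a^'n) set" assume "subsp V \<and> V \<noteq> {0} \<and> vdim V = d"
      then have V: "subsp V" "V \<noteq> {0}" "vdim V = d" by auto
      have sub: "{U' \<in> NZ V. U' \<subset> U} = NZ U" if "U \<in> NZ V" for U
        using that by (auto simp: NZ_def)
      have "achain V = 1 + (\<Sum>U\<in>NZ V. \<Sum>D\<in>chs (NZ U). (-1) ^ card (insert U D))"
        unfolding achain_def by (subst chs_split) (simp add: sub)
      also have "\<dots> = 1 - (\<Sum>U\<in>NZ V. achain U)"
      proof -
        have "(\<Sum>D\<in>chs (NZ U). (-1::real) ^ card (insert U D)) = - achain U" if "U \<in> NZ V" for U
        proof -
          have "(\<Sum>D\<in>chs (NZ U). (-1::real) ^ card (insert U D)) = (\<Sum>D\<in>chs (NZ U). - ((-1) ^ card D))"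
          proof (rule sum.cong[OF refl])
            fix D assume "D \<in> chs (NZ U)"
            then have "card (insert U D) = Suc (card D)"
              using chs_card_insert[of D "NZ V" U] sub[OF that] by simp
            then show "(-1::real) ^ card (insert U D) = - ((-1) ^ card D)" by simp
          qed
          then show ?thesis unfolding achain_def by (simp add: sum_negf)
        qed
        then show ?thesis by (simp add: sum_negf)
      qed
      also have "(\<Sum>U\<in>NZ V. achain U) = - (\<Sum>U\<in>NZ V. mus ?q (vdim U))"
      proof -
        have "achain U = - mus ?q (vdim U)" if "U \<in> NZ V" for U
        proof -
          have U: "subsp U" "U \<noteq> {0}" "U \<subset> V" using that by (auto simp: NZ_def)
          have "vdim U < d" using subsp_psubset_dim[OF U(1) V(1) U(3)] V(3) by simp
          then show ?thesis using less.IH U by blast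
        qed
        then show ?thesis by (simp add: sum_negf)
      qed
      also have "(\<Sum>U\<in>NZ V. mus ?q (vdim U)) = - 1 - mus ?q (vdim V)"
      proof -
        have split: "{U. subsp U \<and> U \<subseteq> V} = insert {0} (insert V (NZ V))"
          using V subsp_zero_in[OF V(1)] subsp_zero by (auto simp: NZ_def)
        have "vdim V \<noteq> 0" using vdim_eq0[OF V(1)] V(2) by simp
        then have "(\<Sum>U\<in>{U. subsp U \<and> U \<subseteq> V}. mus ?q (vdim U)) = 0"
          using sum_subspaces_below[OF V(1)] by simp
        moreover have "{0} \<notin> insert V (NZ V)" "V \<notin> NZ V" using V(2) by (auto simp: NZ_def)
        ultimately have "mus ?q 0 + (mus ?q (vdim V) + (\<Sum>U\<in>NZ V. mus ?q (vdim U))) = 0"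
          unfolding split by simp
        then show ?thesis by (simp add: mus_def)
      qed
      finally show "achain V = - mus ?q (vdim V)" by simp
    qed
  qed
  then show ?thesis using V by blast
qed

context qmat
begin

lemma order_complex_chs: "order_complex rho = chs {V. indep rho V \<and> V \<noteq> {0}}"
  unfolding order_complex_def chs_def by auto

lemma euler_formula:
  "real_of_int (euler_char rho) = - (\<Sum>V\<in>{V. indep rho V}. mus CARD('a) (vdim V))"
proof -
  let ?q = "CARD('a)"
  let ?IF = "{V. indep rho V \<and> V \<noteq> {0}}"
  have "real_of_int (euler_char rho) = (\<Sum>C\<in>chs ?IF. - ((-1) ^ card C))"
    unfolding euler_char_def order_complex_chs by simp
  also have "\<dots> = - 1 + (\<Sum>V\<in>?IF. \<Sum>D\<in>chs {U\<in>?IF. U \<subset> V}. - ((-1) ^ card (insert V D)))"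
    by (subst chs_split) simp
  also have "(\<Sum>V\<in>?IF. \<Sum>D\<in>chs {U\<in>?IF. U \<subset> V}. - ((-1::real) ^ card (insert V D))) = (\<Sum>V\<in>?IF. achain V)"
  proof (rule sum.cong[OF refl])
    fix V assume V: "V \<in> ?IF"
    have e: "{U\<in>?IF. U \<subset> V} = NZ V"
      using V indep_sub unfolding NZ_def by (auto simp: indep_def)
    show "(\<Sum>D\<in>chs {U\<in>?IF. U \<subset> V}. - ((-1::real) ^ card (insert V D))) = achain V"
      unfolding achain_def
    proof (rule sum.cong)
      show "chs {U\<in>?IF. U \<subset> V} = chs (NZ V)" using e by simp
      fix D assume "D \<in> chs (NZ V)"
      then have "card (insert V D) = Suc (card D)" using chs_card_insert[of D ?IF V] e by simp
      then show "- ((-1::real) ^ card (insert V D)) = (-1) ^ card D" by simp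
    qed
  qed
  also have "(\<Sum>V\<in>?IF. achain V) = - (\<Sum>V\<in>?IF. mus ?q (vdim V))"
  proof -
    have "achain V = - mus ?q (vdim V)" if "V \<in> ?IF" for V
      using achain_formula that by (auto simp: indep_def)
    then show ?thesis by (simp add: sum_negf)
  qed
  also have "(\<Sum>V\<in>{V. indep rho V}. mus ?q (vdim V)) = 1 + (\<Sum>V\<in>?IF. mus ?q (vdim V))"
  proof -
    have "indep rho {0}" by (simp add: indep_def subsp_zero)
    then have "{V. indep rho V} = insert {0} ?IF" by auto
    then show ?thesis by (simp add: mus_def)
  qed
  ultimately show ?thesis by simp
qed

end


lemma alt_pow_sum_real:
  assumes "finite A"
  shows "(\<Sum>X\<in>Pow A. (-1::real) ^ card X) = (if A = {} then 1 else 0)"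
proof (cases "A = {}")
  case True
  then show ?thesis by simp
next
  case False
  have "(\<Sum>X\<in>Pow A. (-1::real) ^ card X) = real_of_int (\<Sum>X\<in>Pow A. (-1::int) ^ card X)" by simp
  also have "\<dots> = 0" using alt_pow_sum[OF assms False] by simp
  finally show ?thesis using False by simp
qed

context qmat
begin

lemma incl_excl:
  "(\<Sum>V\<in>{V. indep rho V}. mus CARD('a) (vdim V))
   = (\<Sum>X\<in>Pow (qcircuits rho). (-1) ^ card X * (\<Sum>V\<in>{V. subsp V \<and> vspan (\<Union>X) \<subseteq> V}. mus CARD('a) (vdim V)))"
proof -
  let ?q = "CARD('a)"
  let ?S = "{V :: ('a^'n) set. subsp V}"
  let ?P = "Pow (qcircuits rho)"
  have finS: "finite ?S" and finP: "finite ?P" by simp_all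
  have "(\<Sum>V\<in>{V. indep rho V}. mus ?q (vdim V)) = (\<Sum>V\<in>?S. if indep rho V then mus ?q (vdim V) else 0)"
  proof -
    have "{V. indep rho V} = {V\<in>?S. indep rho V}" by (auto simp: indep_def)
    then show ?thesis by (simp only: sum.inter_filter[OF finS])
  qed
  also have "\<dots> = (\<Sum>V\<in>?S. \<Sum>X\<in>{X\<in>?P. \<Union>X \<subseteq> V}. (-1) ^ card X * mus ?q (vdim V))"
  proof (rule sum.cong[OF refl])
    fix V assume V: "V \<in> ?S"
    have e: "{X\<in>?P. \<Union>X \<subseteq> V} = Pow {C\<in>qcircuits rho. C \<subseteq> V}" by auto
    have "(\<Sum>X\<in>{X\<in>?P. \<Union>X \<subseteq> V}. (-1) ^ card X * mus ?q (vdim V))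
        = (\<Sum>X\<in>Pow {C\<in>qcircuits rho. C \<subseteq> V}. (-1::real) ^ card X) * mus ?q (vdim V)"
      unfolding e by (simp add: sum_distrib_right)
    also have "\<dots> = (if {C\<in>qcircuits rho. C \<subseteq> V} = {} then 1 else 0) * mus ?q (vdim V)"
      by (subst alt_pow_sum_real) simp_all
    also have "\<dots> = (if indep rho V then mus ?q (vdim V) else 0)"
      using indep_iff_no_circuit[of V] V by auto
    finally show "(if indep rho V then mus ?q (vdim V) else 0)
        = (\<Sum>X\<in>{X\<in>?P. \<Union>X \<subseteq> V}. (-1) ^ card X * mus ?q (vdim V))" by simp
  qed
  also have "\<dots> = (\<Sum>X\<in>?P. \<Sum>V\<in>{V\<in>?S. \<Union>X \<subseteq> V}. (-1) ^ card X * mus ?q (vdim V))"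
    by (rule sum.swap_restrict[OF finS finP])
  also have "\<dots> = (\<Sum>X\<in>?P. (-1) ^ card X * (\<Sum>V\<in>{V. subsp V \<and> vspan (\<Union>X) \<subseteq> V}. mus ?q (vdim V)))"
  proof (rule sum.cong[OF refl])
    fix X assume X: "X \<in> ?P"
    have "{V\<in>?S. \<Union>X \<subseteq> V} = {V. subsp V \<and> vspan (\<Union>X) \<subseteq> V}"
    proof -
      have "\<Union>X \<subseteq> V \<longleftrightarrow> vspan (\<Union>X) \<subseteq> V" if "subsp V" for V
        using vspan_Union_sub[OF that, of X] vspan_Union_sup[of _ X] by blast
      then show ?thesis by auto
    qed
    then show "(\<Sum>V\<in>{V\<in>?S. \<Union>X \<subseteq> V}. (-1) ^ card X * mus ?q (vdim V))
        = (-1) ^ card X * (\<Sum>V\<in>{V. subsp V \<and> vspan (\<Union>X) \<subseteq> V}. mus ?q (vdim V))"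
      by (simp add: sum_distrib_left)
  qed
  finally show ?thesis .
qed

lemma coloop_no_spanning:
  assumes col: "coloop rho l" and X: "X \<subseteq> qcircuits rho"
  shows "vspan (\<Union>X) \<noteq> UNIV"
proof -
  let ?n = "CARD('n)"
  let ?H = "orth l"
  have ls: "subsp l" and ld: "vdim l = 1" and dr: "dual_rank rho l = 0"
    using col unfolding coloop_def by auto
  have Hs: "subsp ?H" by (rule subsp_orth)
  have Hd: "vdim ?H + 1 = ?n" using vdim_orth[OF ls] ld by simp
  have rH: "int (rho ?H) + 1 = int (rho UNIV)" using dr ld unfolding dual_rank_def by simp
  have nH: "nullity rho ?H = nullity rho UNIV"
    using Hd rH rho_le[OF Hs] rho_le[OF subsp_UNIV] vdim_UNIV[where 'a='a and 'n='n]
    unfolding nullity_def by linarith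
  have "C \<subseteq> ?H" if C: "C \<in> qcircuits rho" for C
  proof (rule ccontr)
    assume "\<not> C \<subseteq> ?H"
    then have "nullity rho ?H + 1 \<le> nullity rho (vsum ?H C)" by (rule circuit_not_sub[OF C Hs])
    moreover have "nullity rho (vsum ?H C) \<le> nullity rho UNIV"
      using nullity_mono[OF vsum_subsp[OF Hs] subsp_UNIV] circuit_props[OF C] by blast
    ultimately show False using nH by simp
  qed
  then have "vspan (\<Union>X) \<subseteq> ?H" using X by (intro vspan_Union_sub[OF Hs]) auto
  moreover have "?H \<noteq> UNIV" using Hd vdim_UNIV[where 'a='a and 'n='n] by auto
  ultimately show ?thesis by blast
qed

lemma no_coloop_top:
  assumes nc: "\<not> (\<exists>l. coloop rho l)"
  shows "UNIV \<in> qcycles rho"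
proof -
  have "sc UNIV = UNIV"
  proof (rule ccontr)
    assume ne: "sc UNIV \<noteq> UNIV"
    let ?n = "CARD('n)"
    have "sc UNIV \<subset> UNIV" using ne by blast
    then have lt: "vdim (sc UNIV) < vdim (UNIV :: ('a^'n) set)" by (rule subsp_psubset_dim[OF sc_subsp subsp_UNIV])
    then have le1: "vdim (sc UNIV) \<le> vdim (UNIV :: ('a^'n) set) - 1" by simp
    obtain H where H: "subsp H" "sc UNIV \<subseteq> H" "vdim H = vdim (UNIV :: ('a^'n) set) - 1"
      using subsp_step[OF sc_subsp subsp_UNIV _ le1] by auto
    have dW: "vdim (UNIV :: ('a^'n) set) = Suc (vdim H)" using H(3) lt by simp
    have "rho H \<noteq> rho UNIV"
    proof
      assume "rho H = rho UNIV"
      then obtain C where C: "C \<in> qcircuits rho" "\<not> C \<subseteq> H"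
        using hyperplane_circuit[OF H(1) subsp_UNIV _ dW] by blast
      then show False using circuit_sub_sc[OF C(1), of UNIV] H(2) by blast
    qed
    then have rU: "rho UNIV = Suc (rho H)"
      using rho_mono[OF H(1) subsp_UNIV] rho_step1[OF H(1) subsp_UNIV _ dW] by simp
    let ?l = "orth H"
    have ls: "subsp ?l" by (rule subsp_orth)
    have ld: "vdim ?l = 1" using vdim_orth[OF H(1)] dW vdim_UNIV[where 'a='a and 'n='n] by simp
    have "orth ?l = H" by (rule orth_orth[OF H(1)])
    then have "dual_rank rho ?l = 0" unfolding dual_rank_def using ld rU by simp
    then have "coloop rho ?l" unfolding coloop_def using ls ld by simp
    then show False using nc by blast
  qed
  then show ?thesis using sc_in_cycles[of UNIV] by simp
qed

end


lemma neg1_powi: "(-1::real) powi (int r - 1) = - ((-1) ^ r)"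
proof (cases r)
  case 0
  then show ?thesis by (simp add: power_int_minus)
next
  case (Suc r')
  then have "int r - 1 = int r'" by simp
  then show ?thesis using Suc by simp
qed

lemma sign_shift:
  assumes "1 \<le> i" "j \<le> n"
  shows "(-1::real) ^ (n + i + j - 1) = - ((-1) ^ i * (-1) ^ (n - j))"
proof -
  obtain i' where i: "i = Suc i'" using assms(1) by (cases i) auto
  have "n + i + j - 1 = (n - j) + i' + 2 * j" using i assms(2) by simp
  then have "(-1::real) ^ (n + i + j - 1) = (-1) ^ (n - j) * (-1) ^ i'"
    by (simp add: power_add power_mult)
  then show ?thesis using i by simp
qed

theorem theorem4p2:
  fixes rho :: "('a::{finite,field} ^ 'n::finite) set \<Rightarrow> nat"
  assumes "qmatroid rho"
  defines "q \<equiv> CARD('a)" and "n \<equiv> CARD('n)" and "r \<equiv> rho UNIV"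
      and "s \<equiv> card (qcircuits rho)"
  shows "real_of_int (euler_char rho) =
     (-1) powi (int r - 1) * real q ^ (n choose 2) * real (mu_bar rho)
     + (\<Sum>l=1..n-1. \<Sum>i=1..s. real (lam rho i l) *
          (\<Sum>j=0..l. (-1) ^ (n + i + j - 1) * real q ^ ((n - j) choose 2) * qbinom q l j))"
proof -
  interpret qmat rho by unfold_locales (rule assms(1))
  have qd: "q = CARD('a)" and nd: "n = CARD('n)" and rd: "r = rho UNIV" and sd: "s = card (qcircuits rho)"
    by (simp_all add: q_def n_def r_def s_def)
  let ?C = "qcircuits rho"
  let ?L = "qcycles rho"
  have q2: "2 \<le> q" using card_field_ge2 qd by simp
  have n1: "1 \<le> n" using nd by (simp add: Suc_le_eq)
  have vU: "vdim (UNIV :: ('a^'n) set) = n" using vdim_UNIV nd by simp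
  have rn: "r \<le> n" using rho_le[OF subsp_UNIV] vU rd by simp
  define G where "G W = (\<Sum>V\<in>{V. subsp V \<and> W \<subseteq> V}. mus q (vdim V))" for W :: "('a^'n) set"
  define Gl where "Gl l = (\<Sum>j=0..l. qbinom q l j * mus q (n - j))" for l
  define sp where "sp X = vspan (\<Union>X)" for X :: "('a^'n) set set"
  have spsub: "subsp (sp X)" for X unfolding sp_def by (rule vspan_subsp)
  have GGl: "G W = Gl (n - vdim W)" if "subsp W" for W
    unfolding G_def Gl_def using sum_superspaces[OF that] qd nd by simp
  have chi: "real_of_int (euler_char rho) = - (\<Sum>X\<in>Pow ?C. (-1) ^ card X * G (sp X))"
    using euler_formula incl_excl qd unfolding G_def sp_def by simp
  define U where "U = {X\<in>Pow ?C. sp X = UNIV}"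
  define Oth where "Oth = {X\<in>Pow ?C. X \<noteq> {} \<and> sp X \<noteq> UNIV}"
  have sp0: "sp {} = {0}" unfolding sp_def vspan_vec Union_empty by (rule vec.span_empty)
  have UNIV0: "(UNIV :: ('a^'n) set) \<noteq> {0}"
  proof
    assume "(UNIV :: ('a^'n) set) = {0}"
    then have "vdim (UNIV :: ('a^'n) set) = 0" by (metis vdim_zero)
    then show False using vU n1 by simp
  qed
  have part: "Pow ?C = insert {} (U \<union> Oth)" unfolding U_def Oth_def by auto
  have disj: "{} \<notin> U \<union> Oth" "U \<inter> Oth = {}" unfolding U_def Oth_def using sp0 UNIV0 by auto
  have finUO: "finite U" "finite Oth" by simp_all
  have E0: "G (sp {}) = 0"
  proof -
    have "{V. subsp V \<and> sp {} \<subseteq> V} = {V. subsp V \<and> V \<subseteq> UNIV}" using sp0 subsp_zero_in by auto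
    moreover have "(\<Sum>U\<in>{U. subsp U \<and> U \<subseteq> (UNIV::('a^'n) set)}. mus CARD('a) (vdim U)) = 0"
      by (rule sum_subspaces_below) (use subsp_UNIV vU n1 in auto)
    ultimately show ?thesis unfolding G_def using qd by simp
  qed
  have EU: "(\<Sum>X\<in>U. (-1) ^ card X * G (sp X)) = real_of_int (gcc UNIV) * mus q n"
  proof -
    have GU: "G UNIV = mus q n"
    proof -
      have "{V. subsp V \<and> (UNIV :: ('a^'n) set) \<subseteq> V} = {UNIV}" using subsp_UNIV by auto
      then show ?thesis unfolding G_def using vU by simp
    qed
    have "(\<Sum>X\<in>U. (-1) ^ card X * G (sp X)) = (\<Sum>X\<in>U. (-1) ^ card X) * mus q n"
      by (simp add: sum_distrib_right U_def GU)
    moreover have "U = {X. X \<subseteq> ?C \<and> vspan (\<Union>X) = UNIV}" unfolding U_def sp_def by auto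
    ultimately show ?thesis unfolding gcc_def by simp
  qed
  have EO: "(\<Sum>X\<in>Oth. (-1) ^ card X * G (sp X))
      = (\<Sum>l=1..n-1. \<Sum>i=1..s. real (lam rho i l) * ((-1) ^ i * Gl l))"
  proof -
    define p where "p X = (n - vdim (sp X), card X)" for X
    have pO: "p ` Oth \<subseteq> {1..n-1} \<times> {1..s}"
    proof
      fix y assume "y \<in> p ` Oth"
      then obtain X where X: "X \<in> Oth" "y = p X" by blast
      have XC: "X \<subseteq> ?C" "X \<noteq> {}" "sp X \<noteq> UNIV" using X unfolding Oth_def by auto
      have "card X \<le> s" using card_mono[of ?C X] XC sd by simp
      moreover have "1 \<le> card X" using XC(2) by (simp add: Suc_le_eq card_gt_0_iff)
      moreover have "vdim (sp X) < n"
        using subsp_psubset_dim[OF spsub subsp_UNIV] XC(3) vU by blast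
      moreover have "1 \<le> vdim (sp X)"
      proof -
        obtain C where C: "C \<in> X" using XC(2) by blast
        then have "C \<subseteq> sp X" unfolding sp_def by (rule vspan_Union_sup)
        moreover have "vdim C \<noteq> 0" using vdim_eq0 circuit_props circuit_nonzero C XC(1) by blast
        ultimately show ?thesis using vdim_mono[of C "sp X"] by simp
      qed
      ultimately show "y \<in> {1..n-1} \<times> {1..s}" using X(2) unfolding p_def by auto
    qed
    have "(\<Sum>X\<in>Oth. (-1) ^ card X * G (sp X)) = (\<Sum>y\<in>{1..n-1} \<times> {1..s}. \<Sum>X\<in>{X\<in>Oth. p X = y}. (-1) ^ card X * G (sp X))"
      by (rule sum.group[symmetric, OF finUO(2) _ pO]) simp
    also have "\<dots> = (\<Sum>y\<in>{1..n-1} \<times> {1..s}. real (lam rho (snd y) (fst y)) * ((-1) ^ snd y * Gl (fst y)))"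
    proof (rule sum.cong[OF refl])
      fix y assume y: "y \<in> {1..n-1} \<times> {1..s}"
      obtain l i where yl: "y = (l, i)" by (cases y)
      have li: "1 \<le> l" "l \<le> n - 1" "1 \<le> i" using y yl by auto
      have set: "{X\<in>Oth. p X = y} = {X. X \<subseteq> ?C \<and> card X = i \<and> CARD('n) - vdim (vspan (\<Union>X)) = l}"
      proof -
        have "X \<in> Oth" if "X \<subseteq> ?C" "card X = i" "n - vdim (sp X) = l" for X
        proof -
          have "X \<noteq> {}" using that(2) li(3) by auto
          moreover have "sp X \<noteq> UNIV" using that(3) li(1) vU by auto
          ultimately show ?thesis using that unfolding Oth_def by auto
        qed
        then show ?thesis unfolding p_def yl using nd unfolding Oth_def sp_def by auto
      qed
      have "(\<Sum>X\<in>{X\<in>Oth. p X = y}. (-1) ^ card X * G (sp X)) = (\<Sum>X\<in>{X\<in>Oth. p X = y}. (-1) ^ i * Gl l)"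
      proof (rule sum.cong[OF refl])
        fix X assume "X \<in> {X\<in>Oth. p X = y}"
        then have "card X = i" "n - vdim (sp X) = l" unfolding p_def yl by auto
        then show "(-1) ^ card X * G (sp X) = (-1) ^ i * Gl l" using GGl[OF spsub] by simp
      qed
      also have "\<dots> = real (lam rho i l) * ((-1) ^ i * Gl l)"
        unfolding lam_def set[symmetric] by simp
      finally show "(\<Sum>X\<in>{X\<in>Oth. p X = y}. (-1) ^ card X * G (sp X)) = real (lam rho (snd y) (fst y)) * ((-1) ^ snd y * Gl (fst y))"
        using yl by simp
    qed
    also have "\<dots> = (\<Sum>l=1..n-1. \<Sum>i=1..s. real (lam rho i l) * ((-1) ^ i * Gl l))"
      unfolding sum.cartesian_product by (simp add: split_beta)
    finally show ?thesis .
  qed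
  have chi2: "real_of_int (euler_char rho) = - (real_of_int (gcc UNIV) * mus q n)
      - (\<Sum>l=1..n-1. \<Sum>i=1..s. real (lam rho i l) * ((-1) ^ i * Gl l))"
  proof -
    have "(\<Sum>X\<in>Pow ?C. (-1) ^ card X * G (sp X)) = (-1) ^ card {} * G (sp {}) + ((\<Sum>X\<in>U. (-1) ^ card X * G (sp X)) + (\<Sum>X\<in>Oth. (-1) ^ card X * G (sp X)))"
      unfolding part using disj finUO by (simp add: sum.union_disjoint)
    then show ?thesis using chi E0 EU EO by simp
  qed
  have T2: "real (lam rho i l) * (\<Sum>j=0..l. (-1) ^ (n + i + j - 1) * real q ^ ((n - j) choose 2) * qbinom q l j)
      = - (real (lam rho i l) * ((-1) ^ i * Gl l))" if "l \<in> {1..n-1}" "i \<in> {1..s}" for l i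
  proof -
    have "(\<Sum>j=0..l. (-1) ^ (n + i + j - 1) * real q ^ ((n - j) choose 2) * qbinom q l j)
        = (\<Sum>j=0..l. - ((-1) ^ i * (qbinom q l j * mus q (n - j))))"
    proof (rule sum.cong[OF refl])
      fix j assume "j \<in> {0..l}"
      then have "j \<le> n" using that by auto
      then have "(-1::real) ^ (n + i + j - 1) = - ((-1) ^ i * (-1) ^ (n - j))"
        using that by (intro sign_shift) auto
      then show "(-1) ^ (n + i + j - 1) * real q ^ ((n - j) choose 2) * qbinom q l j
          = - ((-1) ^ i * (qbinom q l j * mus q (n - j)))" by (simp add: mus_def)
    qed
    also have "\<dots> = - ((-1) ^ i * Gl l)" unfolding Gl_def by (simp add: sum_negf sum_distrib_left)
    finally show ?thesis by simp
  qed
  have T1: "(-1) powi (int r - 1) * real q ^ (n choose 2) * real (mu_bar rho) = - (real_of_int (gcc UNIV) * mus q n)"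
  proof (cases "\<exists>l. coloop rho l")
    case True
    then obtain l where l: "coloop rho l" by blast
    have E: "{X. X \<subseteq> ?C \<and> vspan (\<Union>X) = UNIV} = {}" using coloop_no_spanning[OF l] by blast
    have "gcc UNIV = 0" unfolding gcc_def E by simp
    moreover have "mu_bar rho = 0" using True unfolding mu_bar_def by simp
    ultimately show ?thesis by simp
  next
    case False
    have top: "UNIV \<in> ?L" by (rule no_coloop_top[OF False])
    have "(THE t. t \<in> ?L \<and> (\<forall>c\<in>?L. c \<subseteq> t)) = UNIV"
      by (rule the_equality) (use top in auto)
    then have muL: "mu_L rho = gcc UNIV" unfolding mu_L_def using crosscut[OF top] by simp
    have "0 \<le> (-1) ^ (nullity rho UNIV - nullity rho {0}) * gcc UNIV"
      using rota_sign[OF zero_cycle top] crosscut[OF top] by simp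
    moreover have "nullity rho UNIV - nullity rho {0} = n - r"
      unfolding nullity_def using vU rd by simp
    ultimately have sg: "0 \<le> (-1) ^ (n - r) * gcc UNIV" by simp
    have "\<bar>gcc UNIV\<bar> = (-1) ^ (n - r) * gcc UNIV"
    proof -
      have "\<bar>(-1::int) ^ (n - r) * gcc UNIV\<bar> = \<bar>gcc UNIV\<bar>" by (simp add: abs_mult)
      then show ?thesis using sg by simp
    qed
    moreover have mb0: "mu_bar rho = nat \<bar>gcc UNIV\<bar>"
      unfolding mu_bar_def muL by (rule if_not_P) (use False in blast)
    ultimately have mb: "real (mu_bar rho) = (-1) ^ (n - r) * real_of_int (gcc UNIV)"
      by simp
    have "(-1::real) ^ r * (-1) ^ (n - r) = (-1) ^ n" using rn by (simp add: power_add[symmetric])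
    then show ?thesis unfolding mb neg1_powi mus_def
      by (simp add: algebra_simps)
  qed
  have S: "(\<Sum>l=1..n-1. \<Sum>i=1..s. real (lam rho i l) *
          (\<Sum>j=0..l. (-1) ^ (n + i + j - 1) * real q ^ ((n - j) choose 2) * qbinom q l j))
      = (\<Sum>l=1..n-1. \<Sum>i=1..s. - (real (lam rho i l) * ((-1) ^ i * Gl l)))"
  proof (rule sum.cong[OF refl])
    fix l assume l: "l \<in> {1..n-1}"
    show "(\<Sum>i=1..s. real (lam rho i l) *
          (\<Sum>j=0..l. (-1) ^ (n + i + j - 1) * real q ^ ((n - j) choose 2) * qbinom q l j))
      = (\<Sum>i=1..s. - (real (lam rho i l) * ((-1) ^ i * Gl l)))"
      by (rule sum.cong[OF refl]) (rule T2[OF l])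
  qed
  show ?thesis
    unfolding chi2 T1 S by (simp add: sum_negf)
qed


end
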